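(* Let $(\gamma_j)_{j\ge 1}$ be a sequence of reals with $1\ge\gamma_1\ge\gamma_2\ge\cdots\ge 0$, and consider the associated product weights $\gamma_{\mathfrak u}=\prod_{j\in\mathfrak u}\gamma_j$. Then: (1) The centered regular grid with different mesh-sizes achieves weak tractability (WT) for the $\boldsymbol\gamma$-weighted star discrepancy if and only if $\lim_{j\to\infty} j\gamma_j=0$. (2) The centered regular grid with different mesh-sizes achieves uniform weak tractability (UWT) for the $\boldsymbol\gamma$-weighted star discrepancy if and only if $\lim_{j\to\infty} j^n\gamma_j=0$ for all $n\in\mathbb N$.
   Context: For $d\in\mathbb N$ write $[d]=\{1,\dots,d\}$. For mesh-sizes $m_1,\dots,m_d\in\mathbb N$, the centered regular grid is $\Gamma_{m_1,\dots,m_d}=\{(\frac{2\ell_1+1}{2m_1},\dots,\frac{2\ell_d+1}{2m_d}) : \ell_j\in\{0,1,\dots,m_j-1\}\text{ for } j=1,\dots,d\}$, an $N$-point set with $N=m_1\cdots m_d$. For an $N$-point set $\mathcal P_d\subset[0,1)^d$ with real coefficients $\mathcal A(\mathcal P_d)=\{a_{\boldsymbol x}:\boldsymbol x\in\mathcal P_d\}$, the local discrepancy is $\Delta_{\mathcal P_d,\mathcal A(\mathcal P_d)}(\boldsymbol\alpha)=\sum_{\boldsymbol x\in\mathcal P_d}a_{\boldsymbol x}\mathbf 1_{[\boldsymbol 0,\boldsymbol\alpha)}(\boldsymbol x)-\prod_{j=1}^d\alpha_j$ for $\boldsymbol\alpha=(\alpha_1,\dots,\alpha_d)\in[0,1]^d$,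 where $[\boldsymbol 0,\boldsymbol\alpha)=[0,\alpha_1)\times\cdots\times[0,\alpha_d)$. Given weights $\gamma_{\mathfrak u}\in[0,1]$ for $\emptyset\ne\mathfrak u\subseteq[d]$, the $\boldsymbol\gamma$-weighted star discrepancy is $D^*_{N,\boldsymbol\gamma}(\mathcal P_d,\mathcal A(\mathcal P_d))=\sup_{\boldsymbol\alpha\in[0,1]^d}\max_{\emptyset\ne\mathfrak u\subseteq[d]}\gamma_{\mathfrak u}|\Delta_{\mathcal P_d,\mathcal A(\mathcal P_d)}((\boldsymbol\alpha_{\mathfrak u},\boldsymbol 1))|$, where $(\boldsymbol\alpha_{\mathfrak u},\boldsymbol 1)=(y_1,\dots,y_d)$ with $y_j=\alpha_j$ for $j\in\mathfrak u$ and $y_j=1$ otherwise. For $\varepsilon\in(0,1)$ and $d\in\mathbb N$ define $N_{\boldsymbol\gamma}(\varepsilon,d)=\min\{N\in\mathbb N: N=m_1\cdots m_d \text{ for some } m_1,\dots,m_d\in\mathbb N \text{ and there exist coefficients } \mathcal A(\Gamma_{m_1,\dots,m_d}) \text{ with } D^*_{N,\boldsymbol\gamma}(\Gamma_{m_1,\dots,m_d},\mathcal A(\Gamma_{m_1,\dots,m_d}))\le\varepsilon\}$. The centered regular grid with different mesh-sizes achieves WT if $\lim_{\varepsilon^{-1}+d\to\infty}\frac{\log N_{\boldsymbol\gamma}(\varepsilon,d)}{\varepsilon^{-1}+d}=0$, and UWT if $\lim_{\varepsilon^{-1}+d\to\infty}\frac{\log N_{\boldsymbol\gamma}(\varepsilon,d)}{\varepsilon^{-t_1}+d^{t_2}}=0$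 for all $t_1,t_2\in(0,1]$. *)

theory Defs
  imports Complex_Main
begin

text \<open>Points of [0,1)^d are represented as functions nat \<Rightarrow> real, coordinates
  indexed by 1..d, and coordinate value 0 outside {1..d}.\<close>

definition centered_grid :: "nat \<Rightarrow> (nat \<Rightarrow> nat) \<Rightarrow> (nat \<Rightarrow> real) set" where
  "centered_grid d m = {x. \<exists>l::nat \<Rightarrow> nat.
       (\<forall>j\<in>{1..d}. l j < m j \<and> x j = (2 * real (l j) + 1) / (2 * real (m j)))
     \<and> (\<forall>j. j \<notin> {1..d} \<longrightarrow> x j = 0)}"

definition local_disc ::
  "nat \<Rightarrow> (nat \<Rightarrow> real) set \<Rightarrow> ((nat \<Rightarrow> real) \<Rightarrow> real) \<Rightarrow> (nat \<Rightarrow> real) \<Rightarrow> real" where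
  "local_disc d P a \<alpha> =
     (\<Sum>x\<in>P. a x * (if (\<forall>j\<in>{1..d}. 0 \<le> x j \<and> x j < \<alpha> j) then 1 else 0))
     - (\<Prod>j\<in>{1..d}. \<alpha> j)"

definition proj_one :: "nat set \<Rightarrow> (nat \<Rightarrow> real) \<Rightarrow> (nat \<Rightarrow> real)" where
  "proj_one u \<alpha> = (\<lambda>j. if j \<in> u then \<alpha> j else 1)"

definition weighted_star_disc ::
  "(nat set \<Rightarrow> real) \<Rightarrow> nat \<Rightarrow> (nat \<Rightarrow> real) set \<Rightarrow> ((nat \<Rightarrow> real) \<Rightarrow> real) \<Rightarrow> real" where
  "weighted_star_disc W d P a =
     Sup {W u * \<bar>local_disc d P a (proj_one u \<alpha>)\<bar> | u \<alpha>.
            u \<noteq> {} \<and> u \<subseteq> {1..d} \<and> (\<forall>j\<in>{1..d}. 0 \<le> \<alpha> j \<and> \<alpha> j \<le> 1)}"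

definition N_grid :: "(nat set \<Rightarrow> real) \<Rightarrow> real \<Rightarrow> nat \<Rightarrow> nat" where
  "N_grid W \<epsilon> d = (LEAST N. N \<ge> 1 \<and> (\<exists>m::nat \<Rightarrow> nat.
       (\<forall>j\<in>{1..d}. m j \<ge> 1) \<and> N = (\<Prod>j\<in>{1..d}. m j) \<and>
       (\<exists>a. weighted_star_disc W d (centered_grid d m) a \<le> \<epsilon>)))"

definition grid_WT :: "(nat set \<Rightarrow> real) \<Rightarrow> bool" where
  "grid_WT W \<longleftrightarrow> (\<forall>\<delta>>0. \<exists>K. \<forall>\<epsilon> d. 0 < \<epsilon> \<and> \<epsilon> < 1 \<and> d \<ge> 1 \<and> 1 / \<epsilon> + real d > K \<longrightarrow>
       \<bar>ln (real (N_grid W \<epsilon> d)) / (1 / \<epsilon> + real d)\<bar> \<le> \<delta>)"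

definition grid_UWT :: "(nat set \<Rightarrow> real) \<Rightarrow> bool" where
  "grid_UWT W \<longleftrightarrow> (\<forall>t1 t2. 0 < t1 \<and> t1 \<le> 1 \<and> 0 < t2 \<and> t2 \<le> 1 \<longrightarrow>
     (\<forall>\<delta>>0. \<exists>K. \<forall>\<epsilon> d. 0 < \<epsilon> \<and> \<epsilon> < 1 \<and> d \<ge> 1 \<and>
        (1 / \<epsilon>) powr t1 + real d powr t2 > K \<longrightarrow>
       \<bar>ln (real (N_grid W \<epsilon> d)) / ((1 / \<epsilon>) powr t1 + real d powr t2)\<bar> \<le> \<delta>))"

definition product_weights :: "(nat \<Rightarrow> real) \<Rightarrow> nat set \<Rightarrow> real" where
  "product_weights \<gamma> u = (\<Prod>j\<in>u. \<gamma> j)"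

end

theory Submission
  imports Defs "HOL-Library.FuncSet"
begin

lemma count1:
  fixes m :: nat and \<alpha> :: real
  assumes m: "m \<ge> 1" and a0: "0 \<le> \<alpha>" and a1: "\<alpha> \<le> 1"
  shows "\<bar>real (card {l. l < m \<and> (2 * real l + 1) / (2 * real m) < \<alpha>}) / real m - \<alpha>\<bar> \<le> 1 / (2 * real m)"
proof -
  define y where "y = real m * \<alpha> - 1/2"
  define n where "n = min m (nat \<lceil>y\<rceil>)"
  have mpos: "real m > 0" using m by simp
  have "{l. l < m \<and> (2 * real l + 1) / (2 * real m) < \<alpha>} = {..<n}"
  proof (intro set_eqI iffI)
    fix l assume "l \<in> {l. l < m \<and> (2 * real l + 1) / (2 * real m) < \<alpha>}"
    then have l: "l < m" "(2 * real l + 1) < \<alpha> * (2 * real m)" using mpos by (auto simp: divide_less_eq)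
    then have "real l < y" unfolding y_def by (simp add: algebra_simps)
    then have "int l < \<lceil>y\<rceil>" by (simp add: less_ceiling_iff)
    then show "l \<in> {..<n}" using l unfolding n_def by auto
  next
    fix l assume "l \<in> {..<n}"
    then have l: "l < m" "int l < \<lceil>y\<rceil>" unfolding n_def by auto
    then have "real l < y" by (simp add: less_ceiling_iff)
    then have "(2 * real l + 1) < \<alpha> * (2 * real m)" unfolding y_def by (simp add: algebra_simps)
    then show "l \<in> {l. l < m \<and> (2 * real l + 1) / (2 * real m) < \<alpha>}" using l mpos by (auto simp: divide_less_eq)
  qed
  then have c: "card {l. l < m \<and> (2 * real l + 1) / (2 * real m) < \<alpha>} = n" by simp
  have y1: "y \<le> real m - 1/2" "y \<ge> -1/2" using a0 a1 mpos unfolding y_def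
    by (auto simp: mult_left_le)
  have lo: "real n \<ge> y"
  proof (cases "m \<le> nat \<lceil>y\<rceil>")
    case True then show ?thesis using y1 unfolding n_def by auto
  next
    case False then have "real n = real (nat \<lceil>y\<rceil>)" unfolding n_def by auto
    also have "\<dots> \<ge> y" by linarith
    finally show ?thesis .
  qed
  have hi: "real n \<le> y + 1"
  proof -
    have "real n \<le> real (nat \<lceil>y\<rceil>)" unfolding n_def by auto
    also have "\<dots> \<le> y + 1" using y1 by linarith
    finally show ?thesis .
  qed
  have "\<bar>real n - real m * \<alpha>\<bar> \<le> 1/2" using lo hi unfolding y_def abs_le_iff by linarith
  moreover have "real n / real m - \<alpha> = (real n - real m * \<alpha>) / real m" using mpos by (simp add: field_simps)
  ultimately have "\<bar>real n / real m - \<alpha>\<bar> \<le> (1/2) / real m" using mpos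
    by (metis abs_divide abs_of_nonneg divide_right_mono less_eq_real_def)
  then show ?thesis using c by simp
qed


definition gmap :: "nat \<Rightarrow> (nat \<Rightarrow> nat) \<Rightarrow> (nat \<Rightarrow> nat) \<Rightarrow> (nat \<Rightarrow> real)" where
  "gmap d m l = (\<lambda>j. if j \<in> {1..d} then (2 * real (l j) + 1) / (2 * real (m j)) else 0)"

lemma gmap_inj:
  assumes "\<forall>j\<in>{1..d}. m j \<ge> 1"
  shows "inj_on (gmap d m) (PiE {1..d} T)"
proof (rule inj_onI)
  fix l1 l2 assume l1: "l1 \<in> PiE {1..d} T" and l2: "l2 \<in> PiE {1..d} T" and e: "gmap d m l1 = gmap d m l2"
  show "l1 = l2"
  proof (rule PiE_ext[OF l1 l2])
    fix j assume j: "j \<in> {1..d}"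
    have "(2 * real (l1 j) + 1) / (2 * real (m j)) = (2 * real (l2 j) + 1) / (2 * real (m j))"
      using fun_cong[OF e, of j] j unfolding gmap_def by simp
    moreover have "real (m j) > 0" using assms j by force
    ultimately show "l1 j = l2 j" by (simp add: divide_cancel_right)
  qed
qed

lemma grid_image:
  "centered_grid d m = gmap d m ` PiE {1..d} (\<lambda>j. {..<m j})"
proof (intro set_eqI iffI)
  fix x assume "x \<in> centered_grid d m"
  then obtain l where l: "\<forall>j\<in>{1..d}. l j < m j \<and> x j = (2 * real (l j) + 1) / (2 * real (m j))"
     "\<forall>j. j \<notin> {1..d} \<longrightarrow> x j = 0" unfolding centered_grid_def by blast
  have "x = gmap d m (restrict l {1..d})" using l unfolding gmap_def by auto
  moreover have "restrict l {1..d} \<in> PiE {1..d} (\<lambda>j. {..<m j})" using l by auto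
  ultimately show "x \<in> gmap d m ` PiE {1..d} (\<lambda>j. {..<m j})" by blast
next
  fix x assume "x \<in> gmap d m ` PiE {1..d} (\<lambda>j. {..<m j})"
  then obtain l where l: "l \<in> PiE {1..d} (\<lambda>j. {..<m j})" "x = gmap d m l" by blast
  then show "x \<in> centered_grid d m" unfolding centered_grid_def gmap_def
    by (intro CollectI exI[of _ l]) auto
qed

lemma grid_finite: "finite (centered_grid d m)"
  unfolding grid_image by (intro finite_imageI finite_PiE) auto

lemma grid_pos: "x \<in> centered_grid d m \<Longrightarrow> j \<in> {1..d} \<Longrightarrow> 0 \<le> x j"
  unfolding grid_image gmap_def by auto

lemma grid_sum:
  assumes m: "\<forall>j\<in>{1..d}. m j \<ge> 1"
  shows "(\<Sum>x\<in>centered_grid d m. c * (if (\<forall>j\<in>{1..d}. 0 \<le> x j \<and> x j < \<beta> j) then 1 else 0))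
     = c * (\<Prod>j\<in>{1..d}. real (card {l. l < m j \<and> (2 * real l + 1) / (2 * real (m j)) < \<beta> j}))"
proof -
  define S where "S j = {l. l < m j \<and> (2 * real l + 1) / (2 * real (m j)) < \<beta> j}" for j
  let ?P = "\<lambda>x. \<forall>j\<in>{1..d}. 0 \<le> x j \<and> x j < \<beta> j"
  have "(\<Sum>x\<in>centered_grid d m. c * (if ?P x then 1 else 0)) = (\<Sum>x\<in>{x\<in>centered_grid d m. ?P x}. c)"
  proof -
    have "(\<Sum>x\<in>centered_grid d m. c * (if ?P x then 1 else 0)) = (\<Sum>x\<in>centered_grid d m. if ?P x then c else 0)"
      by (rule sum.cong) auto
    also have "\<dots> = (\<Sum>x\<in>{x\<in>centered_grid d m. ?P x}. c)"
      by (rule sum.inter_filter[symmetric, OF grid_finite])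
    finally show ?thesis .
  qed
  also have "\<dots> = c * real (card {x\<in>centered_grid d m. ?P x})" by simp
  also have "{x\<in>centered_grid d m. ?P x} = gmap d m ` PiE {1..d} S"
  proof (intro set_eqI iffI)
    fix x assume "x \<in> {x\<in>centered_grid d m. ?P x}"
    then obtain l where l: "l \<in> PiE {1..d} (\<lambda>j. {..<m j})" "x = gmap d m l" "?P x"
      unfolding grid_image by blast
    then have "l \<in> PiE {1..d} S" unfolding S_def gmap_def by auto
    then show "x \<in> gmap d m ` PiE {1..d} S" using l by blast
  next
    fix x assume "x \<in> gmap d m ` PiE {1..d} S"
    then obtain l where l: "l \<in> PiE {1..d} S" "x = gmap d m l" by blast
    then have "l \<in> PiE {1..d} (\<lambda>j. {..<m j})" unfolding S_def by auto
    then have "x \<in> centered_grid d m" using l unfolding grid_image by blast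
    moreover have "?P x" using l unfolding S_def gmap_def by auto
    ultimately show "x \<in> {x\<in>centered_grid d m. ?P x}" by blast
  qed
  also have "card (gmap d m ` PiE {1..d} S) = card (PiE {1..d} S)"
  proof (rule card_image)
    have "inj_on (gmap d m) (PiE {1..d} (\<lambda>j. {..<m j}))" by (rule gmap_inj[OF m])
    moreover have "PiE {1..d} S \<subseteq> PiE {1..d} (\<lambda>j. {..<m j})" unfolding S_def by auto
    ultimately show "inj_on (gmap d m) (PiE {1..d} S)" by (rule inj_on_subset)
  qed
  also have "card (PiE {1..d} S) = (\<Prod>j\<in>{1..d}. card (S j))" by (simp add: card_PiE)
  finally show ?thesis unfolding S_def by simp
qed


lemma prod_diff_le:
  fixes a b :: "nat \<Rightarrow> real"
  assumes "finite A" "\<forall>j\<in>A. 0 \<le> a j \<and> a j \<le> 1 \<and> 0 \<le> b j \<and> b j \<le> 1"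
  shows "\<bar>prod a A - prod b A\<bar> \<le> (\<Sum>j\<in>A. \<bar>a j - b j\<bar>)"
  using assms
proof (induction A rule: finite_induct)
  case empty then show ?case by simp
next
  case (insert x F)
  have pa: "0 \<le> prod a F" "prod a F \<le> 1" using insert by (auto intro: prod_nonneg prod_le_1)
  have pb: "0 \<le> prod b F" "prod b F \<le> 1" using insert by (auto intro: prod_nonneg prod_le_1)
  have ab: "0 \<le> a x" "a x \<le> 1" "0 \<le> b x" "b x \<le> 1" using insert by auto
  have "a x * prod a F - b x * prod b F = (a x - b x) * prod a F + b x * (prod a F - prod b F)"
    by (simp add: algebra_simps)
  then have "\<bar>a x * prod a F - b x * prod b F\<bar> \<le> \<bar>a x - b x\<bar> * prod a F + b x * \<bar>prod a F - prod b F\<bar>"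
    using pa ab by (simp add: abs_mult abs_triangle_ineq[THEN order_trans])
  also have "\<dots> \<le> \<bar>a x - b x\<bar> + \<bar>prod a F - prod b F\<bar>"
    using pa ab by (intro add_mono mult_left_le mult_left_le_one_le) auto
  also have "\<dots> \<le> \<bar>a x - b x\<bar> + (\<Sum>j\<in>F. \<bar>a j - b j\<bar>)" using insert by auto
  finally show ?case using insert by simp
qed

lemma prod_half_bound:
  fixes \<gamma> :: "nat \<Rightarrow> real"
  assumes g: "\<forall>i\<ge>1. 0 \<le> \<gamma> i \<and> \<gamma> i \<le> 1" and q: "\<forall>i\<ge>q. \<gamma> i \<le> 1/2"
    and "finite u" "u \<subseteq> {1..}"
  shows "prod \<gamma> u \<le> (1/2) ^ card (u \<inter> {q..})"
  using assms(3,4)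
proof (induction u rule: finite_induct)
  case empty then show ?case by simp
next
  case (insert x F)
  have pF: "0 \<le> prod \<gamma> F" using insert g by (intro prod_nonneg) auto
  have gx: "0 \<le> \<gamma> x" "\<gamma> x \<le> 1" using insert g by auto
  have IH: "prod \<gamma> F \<le> (1/2) ^ card (F \<inter> {q..})" using insert by auto
  show ?case
  proof (cases "x \<ge> q")
    case True
    then have "insert x F \<inter> {q..} = insert x (F \<inter> {q..})" by auto
    moreover have "card (insert x (F \<inter> {q..})) = Suc (card (F \<inter> {q..}))" using insert by auto
    moreover have "\<gamma> x * prod \<gamma> F \<le> (1/2) * (1/2) ^ card (F \<inter> {q..})"
      using q True IH pF gx by (intro mult_mono) auto
    ultimately show ?thesis using insert by simp
  next
    case False
    then have "insert x F \<inter> {q..} = F \<inter> {q..}" by auto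
    moreover have "\<gamma> x * prod \<gamma> F \<le> 1 * (1/2) ^ card (F \<inter> {q..})"
      using IH pF gx by (intro mult_mono) auto
    ultimately show ?thesis using insert by simp
  qed
qed

lemma prod_weight_bound:
  fixes \<gamma> :: "nat \<Rightarrow> real"
  assumes g: "\<forall>i\<ge>1. 0 \<le> \<gamma> i \<and> \<gamma> i \<le> 1" and q: "\<forall>i\<ge>q. \<gamma> i \<le> 1/2"
    and u: "finite u" "u \<subseteq> {1..}"
  shows "2 ^ card u * prod \<gamma> u \<le> 2 ^ q"
proof -
  define k where "k = card (u \<inter> {q..})"
  define a where "a = card (u \<inter> {..<q})"
  have "u = (u \<inter> {..<q}) \<union> (u \<inter> {q..})" by auto
  then have "card u \<le> a + k" unfolding a_def k_def by (metis card_Un_le)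
  moreover have "a \<le> q" unfolding a_def by (metis card_lessThan card_mono finite_lessThan inf_le2)
  ultimately have cu: "card u \<le> q + k" by simp
  have p: "prod \<gamma> u \<le> (1/2) ^ k" unfolding k_def by (rule prod_half_bound[OF g q u])
  have "(2::real) ^ card u * prod \<gamma> u \<le> 2 ^ (q + k) * (1/2) ^ k"
    using p cu g u by (intro mult_mono power_increasing) (auto intro!: prod_nonneg)
  also have "\<dots> = 2 ^ q" by (simp add: power_add power_one_over)
  finally show ?thesis .
qed

lemma sum_weight_bound:
  fixes \<gamma> :: "nat \<Rightarrow> real"
  assumes g: "\<forall>i\<ge>1. 0 \<le> \<gamma> i \<and> \<gamma> i \<le> 1" and q: "\<forall>i\<ge>q. \<gamma> i \<le> 1/2"
    and u: "finite u" "u \<subseteq> {1..}"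
  shows "(\<Sum>j\<in>u. prod \<gamma> (u - {j})) \<le> 2 ^ (q + 1)"
proof (cases "u = {}")
  case True then show ?thesis by simp
next
  case False
  define s where "s = card u"
  have s1: "s \<ge> 1" using False u unfolding s_def by (simp add: Suc_leI card_gt_0_iff)
  have "\<forall>j\<in>u. prod \<gamma> (u - {j}) \<le> 2 ^ q / 2 ^ (s - 1)"
  proof
    fix j assume j: "j \<in> u"
    have "card (u - {j}) = s - 1" using j u unfolding s_def by simp
    moreover have "2 ^ card (u - {j}) * prod \<gamma> (u - {j}) \<le> 2 ^ q"
      using u by (intro prod_weight_bound[OF g q]) auto
    ultimately show "prod \<gamma> (u - {j}) \<le> 2 ^ q / 2 ^ (s - 1)" by (simp add: field_simps)
  qed
  then have "(\<Sum>j\<in>u. prod \<gamma> (u - {j})) \<le> (\<Sum>j\<in>u. 2 ^ q / 2 ^ (s - 1))" by (intro sum_mono) auto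
  also have "\<dots> = real s * 2 ^ q / 2 ^ (s - 1)" unfolding s_def by simp
  also have "\<dots> \<le> 2 ^ (q + 1)"
  proof -
    have "real s < 2 ^ s" by (metis less_exp of_nat_less_numeral_power_cancel_iff of_nat_numeral)
    also have "(2::real) ^ s = 2 * 2 ^ (s - 1)" using s1 by (metis Suc_diff_le diff_Suc_1 power_Suc)
    finally have "real s * 2 ^ q \<le> (2 * 2 ^ (s - 1)) * 2 ^ q" by simp
    then show ?thesis by (simp add: field_simps)
  qed
  finally show ?thesis .
qed


lemma prod_proj_one:
  "(\<Prod>j\<in>{1..d}. proj_one u \<alpha> j) = (\<Prod>j\<in>u \<inter> {1..d}. \<alpha> j)"
proof -
  have "(\<Prod>j\<in>{1..d}. proj_one u \<alpha> j) = (\<Prod>j\<in>{1..d}. if j \<in> u then \<alpha> j else 1)"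
    unfolding proj_one_def by simp
  also have "\<dots> = (\<Prod>j\<in>{1..d} \<inter> u. \<alpha> j)" by (simp add: prod.inter_filter[symmetric] Int_def conj_commute)
  finally show ?thesis by (simp add: Int_commute)
qed

lemma grid_lt1:
  assumes "x \<in> centered_grid d m" "j \<in> {1..d}" shows "x j < 1"
proof -
  obtain l where l: "l j < m j" "x j = (2 * real (l j) + 1) / (2 * real (m j))"
    using assms unfolding centered_grid_def by blast
  then have "2 * real (l j) + 1 < 2 * real (m j)" by linarith
  then show ?thesis using l by (simp add: divide_less_eq)
qed

lemma disc_set_bdd:
  fixes \<gamma> :: "nat \<Rightarrow> real"
  assumes g: "\<forall>i\<ge>1. 0 \<le> \<gamma> i \<and> \<gamma> i \<le> 1"
  shows "bdd_above {product_weights \<gamma> u * \<bar>local_disc d (centered_grid d m) a (proj_one u \<alpha>)\<bar> | u \<alpha>.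
            u \<noteq> {} \<and> u \<subseteq> {1..d} \<and> (\<forall>j\<in>{1..d}. 0 \<le> \<alpha> j \<and> \<alpha> j \<le> 1)}"
proof (rule bdd_aboveI, clarify)
  fix u and \<alpha> :: "nat \<Rightarrow> real" assume u: "u \<noteq> {}" "u \<subseteq> {1..d}" and al: "\<forall>j\<in>{1..d}. 0 \<le> \<alpha> j \<and> \<alpha> j \<le> 1"
  let ?G = "centered_grid d m"
  have w: "0 \<le> product_weights \<gamma> u" "product_weights \<gamma> u \<le> 1" unfolding product_weights_def
    using u g by (auto intro!: prod_nonneg prod_le_1)
  have pr: "0 \<le> (\<Prod>j\<in>{1..d}. proj_one u \<alpha> j)" "(\<Prod>j\<in>{1..d}. proj_one u \<alpha> j) \<le> 1"
    unfolding prod_proj_one using al u by (auto intro!: prod_nonneg prod_le_1)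
  have "\<bar>\<Sum>x\<in>?G. a x * (if (\<forall>j\<in>{1..d}. 0 \<le> x j \<and> x j < proj_one u \<alpha> j) then 1 else 0)\<bar>
      \<le> (\<Sum>x\<in>?G. \<bar>a x * (if (\<forall>j\<in>{1..d}. 0 \<le> x j \<and> x j < proj_one u \<alpha> j) then 1 else 0)\<bar>)"
    by (rule sum_abs)
  also have "\<dots> \<le> (\<Sum>x\<in>?G. \<bar>a x\<bar>)" by (intro sum_mono) auto
  finally have "\<bar>local_disc d ?G a (proj_one u \<alpha>)\<bar> \<le> (\<Sum>x\<in>?G. \<bar>a x\<bar>) + 1"
    unfolding local_disc_def using pr by linarith
  then show "product_weights \<gamma> u * \<bar>local_disc d ?G a (proj_one u \<alpha>)\<bar> \<le> (\<Sum>x\<in>?G. \<bar>a x\<bar>) + 1"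
    using w by (meson abs_ge_zero mult_left_le_one_le order_trans)
qed

lemma disc_lower:
  fixes \<gamma> :: "nat \<Rightarrow> real"
  assumes g: "\<forall>i\<ge>1. 0 \<le> \<gamma> i \<and> \<gamma> i \<le> 1"
    and m: "\<forall>j\<in>{1..d}. m j \<ge> 1"
    and D: "weighted_star_disc (product_weights \<gamma>) d (centered_grid d m) a \<le> \<epsilon>"
    and j: "j \<in> {1..d}"
  shows "\<gamma> j / (2 * real (m j)) \<le> \<epsilon>"
proof -
  let ?G = "centered_grid d m"
  define \<alpha> where "\<alpha> = (\<lambda>i::nat. 1 / (2 * real (m j)))"
  have mj: "real (m j) \<ge> 1" using m j by auto
  have al: "\<forall>i\<in>{1..d}. 0 \<le> \<alpha> i \<and> \<alpha> i \<le> 1" unfolding \<alpha>_def using mj by auto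
  have mem: "product_weights \<gamma> {j} * \<bar>local_disc d ?G a (proj_one {j} \<alpha>)\<bar> \<in>
     {product_weights \<gamma> u * \<bar>local_disc d ?G a (proj_one u \<alpha>)\<bar> | u \<alpha>.
            u \<noteq> {} \<and> u \<subseteq> {1..d} \<and> (\<forall>j\<in>{1..d}. 0 \<le> \<alpha> j \<and> \<alpha> j \<le> 1)}"
    using j al by blast
  have s0: "(\<Sum>x\<in>?G. a x * (if (\<forall>i\<in>{1..d}. 0 \<le> x i \<and> x i < proj_one {j} \<alpha> i) then 1 else 0)) = 0"
  proof (intro sum.neutral ballI)
    fix x assume x: "x \<in> ?G"
    then obtain l where "x j = (2 * real (l j) + 1) / (2 * real (m j))" using j unfolding centered_grid_def by blast
    then have "x j \<ge> 1 / (2 * real (m j))" using mj by (simp add: divide_right_mono)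
    then have "\<not> (x j < proj_one {j} \<alpha> j)" unfolding proj_one_def \<alpha>_def by simp
    then show "a x * (if (\<forall>i\<in>{1..d}. 0 \<le> x i \<and> x i < proj_one {j} \<alpha> i) then 1 else 0) = 0"
      using j by auto
  qed
  have "(\<Prod>i\<in>{1..d}. proj_one {j} \<alpha> i) = \<alpha> j" unfolding prod_proj_one using j by simp
  then have "local_disc d ?G a (proj_one {j} \<alpha>) = - (1 / (2 * real (m j)))"
    unfolding local_disc_def using s0 by (simp add: \<alpha>_def)
  then have "\<gamma> j / (2 * real (m j)) = product_weights \<gamma> {j} * \<bar>local_disc d ?G a (proj_one {j} \<alpha>)\<bar>"
    unfolding product_weights_def using mj by simp
  also have "\<dots> \<le> weighted_star_disc (product_weights \<gamma>) d ?G a"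
    unfolding weighted_star_disc_def by (rule cSup_upper[OF mem disc_set_bdd[OF g]])
  finally show ?thesis using D by simp
qed


lemma count1_one:
  assumes "m \<ge> (1::nat)"
  shows "card {l. l < m \<and> (2 * real l + 1) / (2 * real m) < 1} = m"
proof -
  have "{l. l < m \<and> (2 * real l + 1) / (2 * real m) < 1} = {..<m}"
  proof (intro set_eqI iffI)
    fix l assume "l \<in> {..<m}"
    then have "2 * real l + 1 < 2 * real m" by simp
    then show "l \<in> {l. l < m \<and> (2 * real l + 1) / (2 * real m) < 1}" using \<open>l \<in> {..<m}\<close> assms
      by (simp add: divide_less_eq)
  qed auto
  then show ?thesis by simp
qed

lemma disc_upper:
  fixes \<gamma> :: "nat \<Rightarrow> real"
  assumes g: "\<forall>i\<ge>1. 0 \<le> \<gamma> i \<and> \<gamma> i \<le> 1"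
    and hC: "\<forall>u. u \<subseteq> {1..d} \<longrightarrow> (\<Sum>j\<in>u. prod \<gamma> (u - {j})) \<le> C"
    and Cpos: "C > 0" and ep: "\<epsilon> > 0" and d: "d \<ge> 1"
    and mdef: "\<forall>j. m j = max 1 (nat \<lceil>C * \<gamma> j / (2 * \<epsilon>)\<rceil>)"
  shows "weighted_star_disc (product_weights \<gamma>) d (centered_grid d m) (\<lambda>_. 1 / real (\<Prod>j\<in>{1..d}. m j)) \<le> \<epsilon>"
  unfolding weighted_star_disc_def
proof (rule cSup_least)
  show "{product_weights \<gamma> u * \<bar>local_disc d (centered_grid d m) (\<lambda>_. 1 / real (\<Prod>j\<in>{1..d}. m j)) (proj_one u \<alpha>)\<bar> | u \<alpha>.
            u \<noteq> {} \<and> u \<subseteq> {1..d} \<and> (\<forall>j\<in>{1..d}. 0 \<le> \<alpha> j \<and> \<alpha> j \<le> 1)} \<noteq> {}"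
    using d by (auto intro!: exI[of _ "{1}"] exI[of _ "\<lambda>_. 0"])
next
  fix z assume "z \<in> {product_weights \<gamma> u * \<bar>local_disc d (centered_grid d m) (\<lambda>_. 1 / real (\<Prod>j\<in>{1..d}. m j)) (proj_one u \<alpha>)\<bar> | u \<alpha>.
            u \<noteq> {} \<and> u \<subseteq> {1..d} \<and> (\<forall>j\<in>{1..d}. 0 \<le> \<alpha> j \<and> \<alpha> j \<le> 1)}"
  then obtain u and \<alpha> :: "nat \<Rightarrow> real" where z: "z = product_weights \<gamma> u * \<bar>local_disc d (centered_grid d m) (\<lambda>_. 1 / real (\<Prod>j\<in>{1..d}. m j)) (proj_one u \<alpha>)\<bar>"
    and u: "u \<noteq> {}" "u \<subseteq> {1..d}" and al: "\<forall>j\<in>{1..d}. 0 \<le> \<alpha> j \<and> \<alpha> j \<le> 1" by blast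
  have m1: "\<forall>j. m j \<ge> 1" using mdef by simp
  have mpos: "real (m j) > 0" for j using m1[rule_format, of j] by simp
  define \<beta> where "\<beta> = proj_one u \<alpha>"
  define S where "S j = {l. l < m j \<and> (2 * real l + 1) / (2 * real (m j)) < \<beta> j}" for j
  define c where "c j = real (card (S j)) / real (m j)" for j
  define e where "e j = \<bar>c j - \<beta> j\<bar>" for j
  have fu: "finite u" using u finite_subset by blast
  have beta01: "0 \<le> \<beta> j \<and> \<beta> j \<le> 1" if "j \<in> {1..d}" for j
    using al that unfolding \<beta>_def proj_one_def by auto
  have c01: "0 \<le> c j \<and> c j \<le> 1" for j
  proof -
    have "S j \<subseteq> {..<m j}" unfolding S_def by auto
    then have "card (S j) \<le> m j" by (metis card_lessThan card_mono finite_lessThan)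
    then show ?thesis unfolding c_def using mpos[of j] by simp
  qed
  have "local_disc d (centered_grid d m) (\<lambda>_. 1 / real (\<Prod>j\<in>{1..d}. m j)) \<beta>
      = (1 / real (\<Prod>j\<in>{1..d}. m j)) * (\<Prod>j\<in>{1..d}. real (card (S j))) - (\<Prod>j\<in>{1..d}. \<beta> j)"
    unfolding local_disc_def S_def using grid_sum[of d m "1 / real (\<Prod>j\<in>{1..d}. m j)" \<beta>] m1 by (simp only:) simp
  also have "(1 / real (\<Prod>j\<in>{1..d}. m j)) * (\<Prod>j\<in>{1..d}. real (card (S j))) = (\<Prod>j\<in>{1..d}. c j)"
    unfolding c_def by (simp add: prod_dividef of_nat_prod)
  finally have ld: "local_disc d (centered_grid d m) (\<lambda>_. 1 / real (\<Prod>j\<in>{1..d}. m j)) \<beta>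
      = (\<Prod>j\<in>{1..d}. c j) - (\<Prod>j\<in>{1..d}. \<beta> j)" .
  have "\<bar>(\<Prod>j\<in>{1..d}. c j) - (\<Prod>j\<in>{1..d}. \<beta> j)\<bar> \<le> (\<Sum>j\<in>{1..d}. e j)"
    unfolding e_def using c01 beta01 by (intro prod_diff_le) auto
  also have "(\<Sum>j\<in>{1..d}. e j) = (\<Sum>j\<in>u. e j)"
  proof (rule sum.mono_neutral_right)
    show "\<forall>i\<in>{1..d} - u. e i = 0"
    proof
      fix i assume i: "i \<in> {1..d} - u"
      then have "\<beta> i = 1" unfolding \<beta>_def proj_one_def by simp
      then have "card (S i) = m i" unfolding S_def using count1_one[OF m1[rule_format, of i]] by simp
      then show "e i = 0" unfolding e_def c_def using \<open>\<beta> i = 1\<close> mpos[of i] by simp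
    qed
  qed (use u in auto)
  finally have ldb: "\<bar>local_disc d (centered_grid d m) (\<lambda>_. 1 / real (\<Prod>j\<in>{1..d}. m j)) \<beta>\<bar> \<le> (\<Sum>j\<in>u. e j)"
    using ld by simp
  have e_le: "\<gamma> j * e j \<le> \<epsilon> / C" if j: "j \<in> u" for j
  proof -
    have jd: "j \<in> {1..d}" using j u by auto
    have "e j \<le> 1 / (2 * real (m j))"
      unfolding e_def c_def S_def using count1[OF m1[rule_format, of j]] beta01[OF jd] by simp
    moreover have gj: "0 \<le> \<gamma> j" "\<gamma> j \<le> 1" using g jd by auto
    ultimately have "\<gamma> j * e j \<le> \<gamma> j * (1 / (2 * real (m j)))" using mult_left_mono[of "e j" "1 / (2 * real (m j))" "\<gamma> j"] by blast
    also have "\<dots> \<le> \<epsilon> / C"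
    proof -
      have "m j \<ge> nat \<lceil>C * \<gamma> j / (2 * \<epsilon>)\<rceil>" using mdef[rule_format, of j] by simp
      then have r: "real (m j) \<ge> C * \<gamma> j / (2 * \<epsilon>)"
        using real_nat_ceiling_ge[of "C * \<gamma> j / (2 * \<epsilon>)"] by (meson of_nat_le_iff order_trans)
      have "C * \<gamma> j = (C * \<gamma> j / (2 * \<epsilon>)) * (2 * \<epsilon>)" using ep by simp
      also have "\<dots> \<le> real (m j) * (2 * \<epsilon>)" using r ep by (intro mult_right_mono) auto
      finally have h: "C * \<gamma> j \<le> real (m j) * (2 * \<epsilon>)" .
      have "\<gamma> j * (1 / (2 * real (m j))) = (C * \<gamma> j) / (C * (2 * real (m j)))" using Cpos by simp
      also have "\<dots> \<le> (real (m j) * (2 * \<epsilon>)) / (C * (2 * real (m j)))"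
        using h Cpos mpos[of j] by (intro divide_right_mono) auto
      also have "\<dots> = \<epsilon> / C" using mpos[of j] Cpos by simp
      finally show ?thesis .
    qed
    finally show ?thesis .
  qed
  have "z \<le> product_weights \<gamma> u * (\<Sum>j\<in>u. e j)"
    unfolding z \<beta>_def[symmetric] using ldb u g
    by (intro mult_left_mono) (auto simp: product_weights_def intro!: prod_nonneg)
  also have "\<dots> = (\<Sum>j\<in>u. (\<gamma> j * e j) * prod \<gamma> (u - {j}))"
    unfolding product_weights_def sum_distrib_left
  proof (intro sum.cong refl)
    fix j assume "j \<in> u"
    then have "prod \<gamma> u = \<gamma> j * prod \<gamma> (u - {j})" by (rule prod.remove[OF fu])
    then show "prod \<gamma> u * e j = \<gamma> j * e j * prod \<gamma> (u - {j})" by (simp only: ac_simps)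
  qed
  also have "\<dots> \<le> (\<Sum>j\<in>u. (\<epsilon> / C) * prod \<gamma> (u - {j}))"
  proof (intro sum_mono mult_right_mono)
    fix j assume "j \<in> u"
    then show "\<gamma> j * e j \<le> \<epsilon> / C" by (rule e_le)
    show "0 \<le> prod \<gamma> (u - {j})" using g u by (intro prod_nonneg) auto
  qed
  also have "\<dots> = (\<epsilon> / C) * (\<Sum>j\<in>u. prod \<gamma> (u - {j}))" by (simp add: sum_distrib_left)
  also have "\<dots> \<le> (\<epsilon> / C) * C" 
  proof (rule mult_left_mono)
    show "(\<Sum>j\<in>u. prod \<gamma> (u - {j})) \<le> C" using hC u by blast
    show "0 \<le> \<epsilon> / C" using ep Cpos by simp
  qed
  also have "\<dots> = \<epsilon>" using Cpos by simp
  finally show "z \<le> \<epsilon>" .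
qed


definition mm :: "real \<Rightarrow> (nat \<Rightarrow> real) \<Rightarrow> real \<Rightarrow> nat \<Rightarrow> nat" where
  "mm C \<gamma> \<epsilon> j = max 1 (nat \<lceil>C * \<gamma> j / (2 * \<epsilon>)\<rceil>)"

definition valid_N :: "(nat set \<Rightarrow> real) \<Rightarrow> real \<Rightarrow> nat \<Rightarrow> nat \<Rightarrow> bool" where
  "valid_N W \<epsilon> d N \<longleftrightarrow> N \<ge> 1 \<and> (\<exists>m::nat \<Rightarrow> nat.
       (\<forall>j\<in>{1..d}. m j \<ge> 1) \<and> N = (\<Prod>j\<in>{1..d}. m j) \<and>
       (\<exists>a. weighted_star_disc W d (centered_grid d m) a \<le> \<epsilon>))"

lemma N_grid_eq: "N_grid W \<epsilon> d = (LEAST N. valid_N W \<epsilon> d N)"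
  unfolding N_grid_def valid_N_def by simp

lemma valid_mm:
  fixes \<gamma> :: "nat \<Rightarrow> real"
  assumes g: "\<forall>i\<ge>1. 0 \<le> \<gamma> i \<and> \<gamma> i \<le> 1"
    and hC: "\<forall>u. u \<subseteq> {1..d} \<longrightarrow> (\<Sum>j\<in>u. prod \<gamma> (u - {j})) \<le> C"
    and Cpos: "C > 0" and ep: "\<epsilon> > 0" and d: "d \<ge> 1"
  shows "valid_N (product_weights \<gamma>) \<epsilon> d (\<Prod>j\<in>{1..d}. mm C \<gamma> \<epsilon> j)"
proof -
  have m1: "\<forall>j. mm C \<gamma> \<epsilon> j \<ge> 1" unfolding mm_def by simp
  have "(\<Prod>j\<in>{1..d}. mm C \<gamma> \<epsilon> j) \<ge> 1" using m1 by (metis One_nat_def Suc_le_eq prod_pos)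
  moreover have "weighted_star_disc (product_weights \<gamma>) d (centered_grid d (mm C \<gamma> \<epsilon>))
      (\<lambda>_. 1 / real (\<Prod>j\<in>{1..d}. mm C \<gamma> \<epsilon> j)) \<le> \<epsilon>"
    by (rule disc_upper[OF g hC Cpos ep d]) (simp add: mm_def)
  ultimately show ?thesis unfolding valid_N_def
  proof (intro conjI exI[of _ "mm C \<gamma> \<epsilon>"])
    show "\<forall>j\<in>{1..d}. 1 \<le> mm C \<gamma> \<epsilon> j" using m1 by blast
  qed auto
qed

lemma N_grid_upper:
  fixes \<gamma> :: "nat \<Rightarrow> real"
  assumes g: "\<forall>i\<ge>1. 0 \<le> \<gamma> i \<and> \<gamma> i \<le> 1"
    and hC: "\<forall>u. u \<subseteq> {1..d} \<longrightarrow> (\<Sum>j\<in>u. prod \<gamma> (u - {j})) \<le> C"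
    and Cpos: "C > 0" and ep: "\<epsilon> > 0" and d: "d \<ge> 1"
  shows "1 \<le> N_grid (product_weights \<gamma>) \<epsilon> d"
    "N_grid (product_weights \<gamma>) \<epsilon> d \<le> (\<Prod>j\<in>{1..d}. mm C \<gamma> \<epsilon> j)"
    "valid_N (product_weights \<gamma>) \<epsilon> d (N_grid (product_weights \<gamma>) \<epsilon> d)"
proof -
  have v: "valid_N (product_weights \<gamma>) \<epsilon> d (\<Prod>j\<in>{1..d}. mm C \<gamma> \<epsilon> j)" by (rule valid_mm[OF assms])
  show vv: "valid_N (product_weights \<gamma>) \<epsilon> d (N_grid (product_weights \<gamma>) \<epsilon> d)"
    unfolding N_grid_eq by (rule LeastI[of "valid_N (product_weights \<gamma>) \<epsilon> d", OF v])
  then show "1 \<le> N_grid (product_weights \<gamma>) \<epsilon> d" unfolding valid_N_def by blast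
  show "N_grid (product_weights \<gamma>) \<epsilon> d \<le> (\<Prod>j\<in>{1..d}. mm C \<gamma> \<epsilon> j)"
    unfolding N_grid_eq by (rule Least_le[of "valid_N (product_weights \<gamma>) \<epsilon> d", OF v])
qed

lemma N_grid_lower:
  fixes \<gamma> :: "nat \<Rightarrow> real"
  assumes g: "\<forall>i\<ge>1. 0 \<le> \<gamma> i \<and> \<gamma> i \<le> 1"
    and hC: "\<forall>u. u \<subseteq> {1..d} \<longrightarrow> (\<Sum>j\<in>u. prod \<gamma> (u - {j})) \<le> C"
    and Cpos: "C > 0" and ep: "\<epsilon> > 0" and d: "d \<ge> 1"
    and big: "\<forall>j\<in>{1..d}. \<gamma> j > 2 * \<epsilon>"
  shows "2 ^ d \<le> N_grid (product_weights \<gamma>) \<epsilon> d"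
proof -
  have "valid_N (product_weights \<gamma>) \<epsilon> d (N_grid (product_weights \<gamma>) \<epsilon> d)"
    by (rule N_grid_upper(3)[OF assms(1-5)])
  then obtain m a where m: "\<forall>j\<in>{1..d}. m j \<ge> 1" and N: "N_grid (product_weights \<gamma>) \<epsilon> d = (\<Prod>j\<in>{1..d}. m j)"
    and D: "weighted_star_disc (product_weights \<gamma>) d (centered_grid d m) a \<le> \<epsilon>"
    unfolding valid_N_def by blast
  have m2: "m j \<ge> 2" if j: "j \<in> {1..d}" for j
  proof (rule ccontr)
    assume "\<not> m j \<ge> 2"
    then have "m j = 1" using m j by force
    moreover have "\<gamma> j / (2 * real (m j)) \<le> \<epsilon>" by (rule disc_lower[OF g m D j])
    moreover have "\<gamma> j > 2 * \<epsilon>" using big j by blast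
    ultimately show False by simp
  qed
  have "(\<Prod>j\<in>{1..d}. (2::nat)) \<le> (\<Prod>j\<in>{1..d}. m j)" using m2 by (intro prod_mono) auto
  then show ?thesis using N by simp
qed

lemma ln_N_upper:
  fixes \<gamma> :: "nat \<Rightarrow> real"
  assumes g: "\<forall>i\<ge>1. 0 \<le> \<gamma> i \<and> \<gamma> i \<le> 1"
    and hC: "\<forall>u. u \<subseteq> {1..d} \<longrightarrow> (\<Sum>j\<in>u. prod \<gamma> (u - {j})) \<le> C"
    and Cpos: "C > 0" and ep: "\<epsilon> > 0" and d: "d \<ge> 1"
  shows "ln (real (N_grid (product_weights \<gamma>) \<epsilon> d)) \<le> (\<Sum>j\<in>{1..d}. ln (real (mm C \<gamma> \<epsilon> j)))"
proof -
  have m1: "\<forall>j. mm C \<gamma> \<epsilon> j \<ge> 1" unfolding mm_def by simp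
  have "ln (real (N_grid (product_weights \<gamma>) \<epsilon> d)) \<le> ln (real (\<Prod>j\<in>{1..d}. mm C \<gamma> \<epsilon> j))"
  proof -
    have "N_grid (product_weights \<gamma>) \<epsilon> d \<le> (\<Prod>j\<in>{1..d}. mm C \<gamma> \<epsilon> j)" "1 \<le> N_grid (product_weights \<gamma>) \<epsilon> d"
      using N_grid_upper(1,2)[OF assms] by auto
    then have "real (N_grid (product_weights \<gamma>) \<epsilon> d) \<le> real (\<Prod>j\<in>{1..d}. mm C \<gamma> \<epsilon> j)"
      "0 < real (N_grid (product_weights \<gamma>) \<epsilon> d)" by (simp only: of_nat_le_iff, simp)
    then show ?thesis by (metis ln_le_cancel_iff order_less_le_trans)
  qed
  also have "\<dots> = (\<Sum>j\<in>{1..d}. ln (real (mm C \<gamma> \<epsilon> j)))"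
    unfolding of_nat_prod using m1 by (subst ln_prod) (auto simp: mm_def)
  finally show ?thesis .
qed

lemma mm_props:
  fixes \<gamma> :: "nat \<Rightarrow> real"
  assumes "0 \<le> \<gamma> j" "C > 0" "\<epsilon> > 0"
  shows "0 \<le> ln (real (mm C \<gamma> \<epsilon> j))"
    "ln (real (mm C \<gamma> \<epsilon> j)) \<le> ln (1 + C * \<gamma> j / (2 * \<epsilon>))"
    "C * \<gamma> j \<le> 2 * \<epsilon> \<Longrightarrow> ln (real (mm C \<gamma> \<epsilon> j)) = 0"
proof -
  define x where "x = C * \<gamma> j / (2 * \<epsilon>)"
  have x0: "x \<ge> 0" unfolding x_def using assms by simp
  have m1: "mm C \<gamma> \<epsilon> j \<ge> 1" unfolding mm_def by simp
  then show "0 \<le> ln (real (mm C \<gamma> \<epsilon> j))" by simp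
  have "real (mm C \<gamma> \<epsilon> j) \<le> 1 + x"
  proof (cases "nat \<lceil>x\<rceil> \<le> 1")
    case True then have "mm C \<gamma> \<epsilon> j = 1" unfolding mm_def x_def by simp
    then show ?thesis using x0 by simp
  next
    case False then have "mm C \<gamma> \<epsilon> j = nat \<lceil>x\<rceil>" unfolding mm_def x_def by simp
    then show ?thesis using x0 by linarith
  qed
  then show "ln (real (mm C \<gamma> \<epsilon> j)) \<le> ln (1 + C * \<gamma> j / (2 * \<epsilon>))"
    using m1 unfolding x_def[symmetric] by simp
  assume "C * \<gamma> j \<le> 2 * \<epsilon>"
  then have "x \<le> 1" unfolding x_def using assms by simp
  then have "nat \<lceil>x\<rceil> \<le> 1" by linarith
  then have "mm C \<gamma> \<epsilon> j = 1" unfolding mm_def x_def by simp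
  then show "ln (real (mm C \<gamma> \<epsilon> j)) = 0" by simp
qed


lemma hC_trivial:
  fixes \<gamma> :: "nat \<Rightarrow> real"
  assumes g: "\<forall>i\<ge>1. 0 \<le> \<gamma> i \<and> \<gamma> i \<le> 1"
  shows "\<forall>u. u \<subseteq> {1..d} \<longrightarrow> (\<Sum>j\<in>u. prod \<gamma> (u - {j})) \<le> real d"
proof (intro allI impI)
  fix u assume u: "u \<subseteq> {1..d}"
  have "(\<Sum>j\<in>u. prod \<gamma> (u - {j})) \<le> (\<Sum>j\<in>u. 1)"
    using u g by (intro sum_mono prod_le_1) auto
  also have "\<dots> = real (card u)" by simp
  also have "\<dots> \<le> real d" using u by (metis card_atLeastAtMost card_mono diff_Suc_1 finite_atLeastAtMost of_nat_le_iff)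
  finally show "(\<Sum>j\<in>u. prod \<gamma> (u - {j})) \<le> real d" .
qed

lemma hC_q:
  fixes \<gamma> :: "nat \<Rightarrow> real"
  assumes g: "\<forall>i\<ge>1. 0 \<le> \<gamma> i \<and> \<gamma> i \<le> 1" and q: "\<forall>i\<ge>q. \<gamma> i \<le> 1/2"
  shows "\<forall>u. u \<subseteq> {1..d} \<longrightarrow> (\<Sum>j\<in>u. prod \<gamma> (u - {j})) \<le> 2 ^ (q + 1)"
proof (intro allI impI)
  fix u assume u: "u \<subseteq> {1..d}"
  then have "finite u" "u \<subseteq> {1..}" using finite_subset by auto
  then show "(\<Sum>j\<in>u. prod \<gamma> (u - {j})) \<le> 2 ^ (q + 1)" by (rule sum_weight_bound[OF g q])
qed

lemma gen_tract:
  fixes N :: "real \<Rightarrow> nat \<Rightarrow> nat"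
  assumes pos: "\<forall>\<epsilon> d. 0 < \<epsilon> \<and> \<epsilon> < 1 \<and> d \<ge> 1 \<longrightarrow> N \<epsilon> d \<ge> 1"
    and A: "\<forall>\<delta>>0. \<exists>\<epsilon>0>0. \<forall>\<epsilon> d. 0 < \<epsilon> \<and> \<epsilon> < \<epsilon>0 \<and> \<epsilon> < 1 \<and> d \<ge> 1 \<longrightarrow> ln (real (N \<epsilon> d)) \<le> \<delta> * (1 / \<epsilon>) powr t"
    and B: "\<forall>\<epsilon>0>0. \<exists>B. \<forall>\<epsilon> d. \<epsilon>0 \<le> \<epsilon> \<and> \<epsilon> < 1 \<and> d \<ge> 1 \<longrightarrow> ln (real (N \<epsilon> d)) \<le> B"
  shows "\<forall>\<delta>>0. \<exists>K. \<forall>\<epsilon> d. 0 < \<epsilon> \<and> \<epsilon> < 1 \<and> d \<ge> 1 \<and> (1 / \<epsilon>) powr t + real d powr t2 > K \<longrightarrow>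
       \<bar>ln (real (N \<epsilon> d)) / ((1 / \<epsilon>) powr t + real d powr t2)\<bar> \<le> \<delta>"
proof (intro allI impI)
  fix \<delta> :: real assume dp: "\<delta> > 0"
  obtain \<epsilon>0 where e0: "\<epsilon>0 > 0" and h0: "\<forall>\<epsilon> d. 0 < \<epsilon> \<and> \<epsilon> < \<epsilon>0 \<and> \<epsilon> < 1 \<and> d \<ge> 1 \<longrightarrow> ln (real (N \<epsilon> d)) \<le> \<delta> * (1 / \<epsilon>) powr t"
    using A dp by blast
  obtain B0 where hB: "\<forall>\<epsilon> d. \<epsilon>0 \<le> \<epsilon> \<and> \<epsilon> < 1 \<and> d \<ge> 1 \<longrightarrow> ln (real (N \<epsilon> d)) \<le> B0"
    using B e0 by blast
  show "\<exists>K. \<forall>\<epsilon> d. 0 < \<epsilon> \<and> \<epsilon> < 1 \<and> d \<ge> 1 \<and> (1 / \<epsilon>) powr t + real d powr t2 > K \<longrightarrow>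
       \<bar>ln (real (N \<epsilon> d)) / ((1 / \<epsilon>) powr t + real d powr t2)\<bar> \<le> \<delta>"
  proof (intro exI[of _ "max B0 0 / \<delta>"] allI impI)
    fix \<epsilon> :: real and d :: nat
    assume a: "0 < \<epsilon> \<and> \<epsilon> < 1 \<and> d \<ge> 1 \<and> (1 / \<epsilon>) powr t + real d powr t2 > max B0 0 / \<delta>"
    define D where "D = (1 / \<epsilon>) powr t + real d powr t2"
    have Dpos: "D > 0" unfolding D_def using a by (simp add: add_pos_pos)
    have L0: "ln (real (N \<epsilon> d)) \<ge> 0" using pos a by simp
    have "ln (real (N \<epsilon> d)) \<le> \<delta> * D"
    proof (cases "\<epsilon> < \<epsilon>0")
      case True
      then have "ln (real (N \<epsilon> d)) \<le> \<delta> * (1 / \<epsilon>) powr t" using h0 a by blast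
      also have "\<dots> \<le> \<delta> * D" unfolding D_def using dp by (intro mult_left_mono) auto
      finally show ?thesis .
    next
      case False
      then have "ln (real (N \<epsilon> d)) \<le> B0" using hB a by simp
      also have "B0 \<le> max B0 0" by simp
      also have "max B0 0 = \<delta> * (max B0 0 / \<delta>)" using dp by simp
      also have "\<dots> \<le> \<delta> * D" using a dp unfolding D_def by (intro mult_left_mono) auto
      finally show ?thesis .
    qed
    then have "ln (real (N \<epsilon> d)) / D \<le> \<delta>" using Dpos by (simp add: divide_le_eq)
    then show "\<bar>ln (real (N \<epsilon> d)) / ((1 / \<epsilon>) powr t + real d powr t2)\<bar> \<le> \<delta>"
      using L0 Dpos unfolding D_def[symmetric] by simp
  qed
qed


lemma lower_at:
  fixes \<gamma> :: "nat \<Rightarrow> real"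
  assumes g: "\<forall>i\<ge>1. 0 \<le> \<gamma> i \<and> \<gamma> i \<le> 1"
    and mono: "\<forall>i j. 1 \<le> i \<and> i \<le> j \<longrightarrow> \<gamma> j \<le> \<gamma> i"
    and ep: "\<epsilon> > 0" and j: "j \<ge> 1" and big: "\<gamma> j > 2 * \<epsilon>"
  shows "ln (real (N_grid (product_weights \<gamma>) \<epsilon> j)) \<ge> real j * ln 2"
proof -
  have "\<forall>i\<in>{1..j}. \<gamma> i > 2 * \<epsilon>" using mono big by (meson atLeastAtMost_iff order_less_le_trans)
  then have "2 ^ j \<le> N_grid (product_weights \<gamma>) \<epsilon> j"
    using j ep by (intro N_grid_lower[OF g hC_trivial[OF g]]) auto
  then have "real (2 ^ j) \<le> real (N_grid (product_weights \<gamma>) \<epsilon> j)" by (simp only: of_nat_le_iff)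
  then have le: "(2::real) ^ j \<le> real (N_grid (product_weights \<gamma>) \<epsilon> j)" by simp
  have "(0::real) < 2 ^ j" by simp
  then have "ln ((2::real) ^ j) \<le> ln (real (N_grid (product_weights \<gamma>) \<epsilon> j))"
    using le by (metis ln_le_cancel_iff order_less_le_trans)
  then show ?thesis by (simp add: ln_realpow)
qed

lemma WT_only_if:
  fixes \<gamma> :: "nat \<Rightarrow> real"
  assumes g: "\<forall>i\<ge>1. 0 \<le> \<gamma> i \<and> \<gamma> i \<le> 1"
    and mono: "\<forall>i j. 1 \<le> i \<and> i \<le> j \<longrightarrow> \<gamma> j \<le> \<gamma> i"
    and WT: "grid_WT (product_weights \<gamma>)"
  shows "(\<lambda>j. real j * \<gamma> j) \<longlonglongrightarrow> 0"
proof (rule ccontr)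
  assume "\<not> (\<lambda>j. real j * \<gamma> j) \<longlonglongrightarrow> 0"
  then obtain r where r: "r > 0" and rr: "\<forall>no. \<exists>n\<ge>no. \<not> \<bar>real n * \<gamma> n\<bar> < r"
    unfolding LIMSEQ_iff by auto
  define \<delta> where "\<delta> = ln 2 / (4 / r + 2)"
  have dp: "\<delta> > 0" unfolding \<delta>_def using r by (intro divide_pos_pos add_pos_pos) auto
  obtain K where K: "\<forall>\<epsilon> d. 0 < \<epsilon> \<and> \<epsilon> < 1 \<and> d \<ge> 1 \<and> 1 / \<epsilon> + real d > K \<longrightarrow>
       \<bar>ln (real (N_grid (product_weights \<gamma>) \<epsilon> d)) / (1 / \<epsilon> + real d)\<bar> \<le> \<delta>"
    using WT dp unfolding grid_WT_def by blast
  obtain j where j: "j \<ge> nat \<lceil>K\<rceil> + 1" and jr: "\<not> \<bar>real j * \<gamma> j\<bar> < r" using rr by blast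
  have j1: "j \<ge> 1" and jK: "real j > K" using j by linarith+
  have gj: "0 \<le> \<gamma> j" "\<gamma> j \<le> 1" using g j1 by auto
  have jg: "real j * \<gamma> j \<ge> r" using jr gj by simp
  have rj: "r \<le> real j" using jg gj j1 by (meson mult_left_le order_trans of_nat_0_le_iff)
  define \<epsilon> where "\<epsilon> = r / (4 * real j)"
  have jpos: "real j > 0" using j1 by simp
  have ep: "\<epsilon> > 0" unfolding \<epsilon>_def using r jpos by simp
  have ep1: "\<epsilon> < 1" unfolding \<epsilon>_def using rj jpos r by (simp add: divide_less_eq)
  have ie: "1 / \<epsilon> = 4 * real j / r" unfolding \<epsilon>_def by simp
  have big: "\<gamma> j > 2 * \<epsilon>"
  proof -
    have "2 * \<epsilon> < 4 * \<epsilon>" using ep by simp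
    also have "4 * \<epsilon> = r / real j" unfolding \<epsilon>_def by simp
    also have "\<dots> \<le> \<gamma> j" using jg jpos by (simp add: divide_le_eq mult.commute)
    finally show ?thesis .
  qed
  have L: "ln (real (N_grid (product_weights \<gamma>) \<epsilon> j)) \<ge> real j * ln 2"
    by (rule lower_at[OF g mono ep j1 big])
  have "1 / \<epsilon> > 0" using ep by simp
  then have D: "1 / \<epsilon> + real j > K" using jK by linarith
  have "\<bar>ln (real (N_grid (product_weights \<gamma>) \<epsilon> j)) / (1 / \<epsilon> + real j)\<bar> \<le> \<delta>"
    using K ep ep1 j1 D by blast
  moreover have "real j * ln 2 / (1 / \<epsilon> + real j) > \<delta>"
  proof -
    have "1 / \<epsilon> + real j = real j * (4 / r + 1)" unfolding ie using r by (simp add: field_simps)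
    then have "real j * ln 2 / (1 / \<epsilon> + real j) = ln 2 / (4 / r + 1)" using jpos by simp
    moreover have "ln 2 / (4 / r + 1) > ln 2 / (4 / r + 2)"
    proof (rule divide_strict_left_mono)
      have "4 / r > 0" using r by simp
      then show "0 < (4 / r + 2) * (4 / r + 1)" by (intro mult_pos_pos) linarith+
    qed auto
    ultimately show ?thesis unfolding \<delta>_def by simp
  qed
  moreover have "real j * ln 2 / (1 / \<epsilon> + real j) \<le> \<bar>ln (real (N_grid (product_weights \<gamma>) \<epsilon> j)) / (1 / \<epsilon> + real j)\<bar>"
  proof -
    have "real j * ln 2 / (1 / \<epsilon> + real j) \<le> ln (real (N_grid (product_weights \<gamma>) \<epsilon> j)) / (1 / \<epsilon> + real j)"
      using L ep jpos by (intro divide_right_mono) auto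
    then show ?thesis by linarith
  qed
  ultimately show False by linarith
qed


lemma UWT_only_if:
  fixes \<gamma> :: "nat \<Rightarrow> real"
  assumes g: "\<forall>i\<ge>1. 0 \<le> \<gamma> i \<and> \<gamma> i \<le> 1"
    and mono: "\<forall>i j. 1 \<le> i \<and> i \<le> j \<longrightarrow> \<gamma> j \<le> \<gamma> i"
    and UWT: "grid_UWT (product_weights \<gamma>)" and n: "n \<ge> 1"
  shows "(\<lambda>j. real j ^ n * \<gamma> j) \<longlonglongrightarrow> 0"
proof (rule ccontr)
  assume "\<not> (\<lambda>j. real j ^ n * \<gamma> j) \<longlonglongrightarrow> 0"
  then obtain r where r: "r > 0" and rr: "\<forall>no. \<exists>j\<ge>no. \<not> \<bar>real j ^ n * \<gamma> j\<bar> < r"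
    unfolding LIMSEQ_iff by auto
  define t1 where "t1 = 1 / (2 * real n)"
  have t1: "0 < t1" "t1 \<le> 1" unfolding t1_def using n by auto
  obtain K where K: "\<forall>\<epsilon> d. 0 < \<epsilon> \<and> \<epsilon> < 1 \<and> d \<ge> 1 \<and> (1 / \<epsilon>) powr t1 + real d powr (1/2) > K \<longrightarrow>
       \<bar>ln (real (N_grid (product_weights \<gamma>) \<epsilon> d)) / ((1 / \<epsilon>) powr t1 + real d powr (1/2))\<bar> \<le> 1"
  proof -
    have h: "0 < t1 \<and> t1 \<le> 1 \<and> 0 < (1/2::real) \<and> (1/2::real) \<le> 1" using t1 by simp
    have "\<forall>\<delta>>0. \<exists>K. \<forall>\<epsilon> d. 0 < \<epsilon> \<and> \<epsilon> < 1 \<and> d \<ge> 1 \<and> (1 / \<epsilon>) powr t1 + real d powr (1/2) > K \<longrightarrow>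
       \<bar>ln (real (N_grid (product_weights \<gamma>) \<epsilon> d)) / ((1 / \<epsilon>) powr t1 + real d powr (1/2))\<bar> \<le> \<delta>"
      using UWT h unfolding grid_UWT_def by blast
    then show ?thesis using that zero_less_one by blast
  qed
  define A where "A = (4 / r) powr t1"
  have A0: "A \<ge> 0" unfolding A_def by simp
  define M where "M = max 0 (max K ((A + 1) / ln 2))"
  obtain j where j: "j \<ge> nat \<lceil>M ^ 2\<rceil> + 1" and jr: "\<not> \<bar>real j ^ n * \<gamma> j\<bar> < r" using rr by blast
  have j1: "j \<ge> 1" using j by simp
  have jpos: "real j > 0" using j1 by simp
  have jM: "real j > M ^ 2" using j by linarith
  define s where "s = sqrt (real j)"
  have spos: "s > 0" unfolding s_def using jpos by simp
  have ss: "s * s = real j" unfolding s_def using jpos by simp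
  have sM: "s > M" unfolding s_def using jM by (rule real_less_rsqrt)
  have gj: "0 \<le> \<gamma> j" "\<gamma> j \<le> 1" using g j1 by auto
  have jnpos: "real j ^ n > 0" using jpos by simp
  have jg: "real j ^ n * \<gamma> j \<ge> r" using jr gj jnpos by simp
  have rj: "r \<le> real j ^ n" using jg gj jnpos by (meson mult_left_le order_trans less_imp_le)
  define \<epsilon> where "\<epsilon> = r / (4 * real j ^ n)"
  have ep: "\<epsilon> > 0" unfolding \<epsilon>_def using r jnpos by simp
  have ep1: "\<epsilon> < 1" unfolding \<epsilon>_def using rj jnpos r by (simp add: divide_less_eq)
  have ie: "1 / \<epsilon> = (4 / r) * real j ^ n" unfolding \<epsilon>_def by simp
  have big: "\<gamma> j > 2 * \<epsilon>"
  proof -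
    have "2 * \<epsilon> < 4 * \<epsilon>" using ep by simp
    also have "4 * \<epsilon> = r / real j ^ n" unfolding \<epsilon>_def by simp
    also have "\<dots> \<le> \<gamma> j" using jg jnpos by (simp add: divide_le_eq mult.commute)
    finally show ?thesis .
  qed
  have L: "ln (real (N_grid (product_weights \<gamma>) \<epsilon> j)) \<ge> real j * ln 2"
    by (rule lower_at[OF g mono ep j1 big])
  have pj: "real j powr (1/2) = s" unfolding s_def using jpos by (simp add: powr_half_sqrt)
  have "(1 / \<epsilon>) powr t1 = A * (real j ^ n) powr t1" unfolding ie A_def using r jnpos
    by (subst powr_mult) auto
  also have "(real j ^ n) powr t1 = s"
  proof -
    have "(real j ^ n) powr t1 = (real j powr real n) powr t1" using jpos by (simp add: powr_realpow)
    also have "\<dots> = real j powr (real n * t1)" by (simp add: powr_powr)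
    also have "real n * t1 = 1/2" unfolding t1_def using n by simp
    finally show ?thesis using pj by simp
  qed
  finally have Deq: "(1 / \<epsilon>) powr t1 + real j powr (1/2) = (A + 1) * s" using pj by (simp add: algebra_simps)
  have DK: "(1 / \<epsilon>) powr t1 + real j powr (1/2) > K"
  proof -
    have "K \<le> M" unfolding M_def by simp
    also have "M < s" by (rule sM)
    also have "s \<le> (A + 1) * s" using A0 spos by simp
    finally show ?thesis using Deq by simp
  qed
  have "\<bar>ln (real (N_grid (product_weights \<gamma>) \<epsilon> j)) / ((1 / \<epsilon>) powr t1 + real j powr (1/2))\<bar> \<le> 1"
    using K ep ep1 j1 DK by blast
  moreover have "ln (real (N_grid (product_weights \<gamma>) \<epsilon> j)) / ((1 / \<epsilon>) powr t1 + real j powr (1/2)) > 1"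
  proof -
    have Ap: "A + 1 > 0" using A0 by simp
    have "(A + 1) / ln 2 \<le> M" unfolding M_def by simp
    then have "(A + 1) / ln 2 < s" using sM by simp
    then have "A + 1 < s * ln 2" by (simp add: divide_less_eq)
    then have "(A + 1) * s < real j * ln 2" using spos ss
      by (metis mult.assoc mult.commute mult_strict_left_mono)
    also have "\<dots> \<le> ln (real (N_grid (product_weights \<gamma>) \<epsilon> j))" by (rule L)
    finally show ?thesis unfolding Deq using Ap spos by (simp add: less_divide_eq)
  qed
  ultimately show False by linarith
qed


lemma sum_cut:
  fixes f :: "nat \<Rightarrow> real"
  assumes "\<forall>j\<ge>1. 0 \<le> f j" "\<forall>j\<ge>j1. f j = 0" "\<forall>j\<ge>1. f j \<le> F" "F \<ge> 0"
  shows "(\<Sum>j\<in>{1..d}. f j) \<le> real j1 * F"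
proof -
  have "(\<Sum>j\<in>{1..d}. f j) = (\<Sum>j\<in>{1..d} \<inter> {..<j1}. f j)"
    using assms(2) by (intro sum.mono_neutral_right) (auto, meson not_le)
  also have "\<dots> \<le> (\<Sum>j\<in>{1..d} \<inter> {..<j1}. F)" using assms(3) by (intro sum_mono) auto
  also have "\<dots> = real (card ({1..d} \<inter> {..<j1})) * F" by simp
  also have "\<dots> \<le> real j1 * F"
  proof (rule mult_right_mono)
    have "card ({1..d} \<inter> {..<j1}) \<le> card {..<j1}" by (intro card_mono) auto
    then show "real (card ({1..d} \<inter> {..<j1})) \<le> real j1" by simp
  qed (rule assms(4))
  finally show ?thesis .
qed

lemma sum_cut2:
  fixes f :: "nat \<Rightarrow> real"
  assumes "\<forall>j\<ge>1. 0 \<le> f j" "\<forall>j>M. f j = 0"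
  shows "(\<Sum>j\<in>{1..d}. f j) \<le> (\<Sum>j\<in>{1..M}. f j)"
proof -
  have "(\<Sum>j\<in>{1..d}. f j) = (\<Sum>j\<in>{1..d} \<inter> {1..M}. f j)"
    using assms(2) by (intro sum.mono_neutral_right) auto
  also have "\<dots> \<le> (\<Sum>j\<in>{1..M}. f j)" using assms(1) by (intro sum_mono2) auto
  finally show ?thesis .
qed

lemma ln_sqrt_bound:
  fixes x :: real assumes "x \<ge> 0"
  shows "ln (1 + x) \<le> 2 * sqrt x"
proof -
  have s: "sqrt x \<ge> 0" "sqrt x * sqrt x = x" using assms by auto
  have "1 + x \<le> (1 + sqrt x) ^ 2" using s by (simp add: power2_eq_square algebra_simps)
  then have "ln (1 + x) \<le> ln ((1 + sqrt x) ^ 2)" using assms s by (subst ln_le_cancel_iff) auto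
  also have "\<dots> = 2 * ln (1 + sqrt x)" using s by (simp add: ln_realpow)
  also have "\<dots> \<le> 2 * sqrt x" using s ln_add_one_self_le_self[of "sqrt x"] by simp
  finally show ?thesis .
qed

lemma ln_powr_bound:
  fixes z :: real assumes "z > 0" "k \<ge> (1::nat)"
  shows "ln z \<le> real k * z powr (1 / real k)"
proof -
  have "ln (z powr (1 / real k)) \<le> z powr (1 / real k)" using assms by (intro ln_bound) simp
  then have "(1 / real k) * ln z \<le> z powr (1 / real k)" using assms by (simp add: ln_powr)
  then show ?thesis using assms by (simp add: field_simps)
qed

lemma sum_inv_sqrt: "(\<Sum>j\<in>{1..M}. 1 / sqrt (real j)) \<le> 2 * sqrt (real M)"
proof (induction M)
  case 0 then show ?case by simp
next
  case (Suc M)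
  define a where "a = sqrt (real M)"
  define b where "b = sqrt (real M + 1)"
  have a0: "a \<ge> 0" and b0: "b > 0" unfolding a_def b_def by auto
  have bb: "b * b = real M + 1" unfolding b_def by simp
  have ab: "a * b \<le> real M + 1/2"
  proof -
    have "a * b = sqrt (real M * (real M + 1))" unfolding a_def b_def by (simp add: real_sqrt_mult)
    also have "\<dots> \<le> (real M + (real M + 1)) / 2" by (rule arith_geo_mean_sqrt) auto
    finally show ?thesis by simp
  qed
  have "(\<Sum>j\<in>{1..Suc M}. 1 / sqrt (real j)) = (\<Sum>j\<in>{1..M}. 1 / sqrt (real j)) + 1 / b"
    unfolding b_def by (simp add: add.commute)
  also have "\<dots> \<le> 2 * a + 1 / b" using Suc unfolding a_def by simp
  also have "\<dots> \<le> 2 * b"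
  proof -
    have "(2 * a + 1 / b) * b = 2 * (a * b) + 1" using b0 by (simp add: algebra_simps)
    also have "\<dots> \<le> 2 * (b * b)" using ab bb by simp
    finally have "(2 * a + 1 / b) * b \<le> (2 * b) * b" by simp
    then show ?thesis using b0 by simp
  qed
  finally show ?case unfolding b_def by (simp add: add.commute)
qed


lemma ratio_le:
  fixes C g e e0 :: real
  assumes "C > 0" "0 \<le> g" "g \<le> 1" "0 < e0" "e0 \<le> e"
  shows "C * g / (2 * e) \<le> C / (2 * e0)"
proof -
  have "C * g \<le> C" using assms by (simp add: mult_left_le)
  moreover have "2 * e0 \<le> 2 * e" using assms by simp
  ultimately show ?thesis using assms by (intro frac_le) auto
qed

lemma propB:
  fixes \<gamma> :: "nat \<Rightarrow> real"
  assumes g: "\<forall>i\<ge>1. 0 \<le> \<gamma> i \<and> \<gamma> i \<le> 1"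
    and hC: "\<forall>d. \<forall>u. u \<subseteq> {1..d} \<longrightarrow> (\<Sum>j\<in>u. prod \<gamma> (u - {j})) \<le> C"
    and Cpos: "C > 0" and lim: "(\<lambda>j. real j * \<gamma> j) \<longlonglongrightarrow> 0"
  shows "\<forall>\<epsilon>0>0. \<exists>B. \<forall>\<epsilon> d. \<epsilon>0 \<le> \<epsilon> \<and> \<epsilon> < 1 \<and> d \<ge> 1 \<longrightarrow> ln (real (N_grid (product_weights \<gamma>) \<epsilon> d)) \<le> B"
proof (intro allI impI)
  fix \<epsilon>0 :: real assume e0: "\<epsilon>0 > 0"
  have "2 * \<epsilon>0 / C > 0" using e0 Cpos by simp
  then obtain j1 where j1: "\<forall>j\<ge>j1. \<bar>real j * \<gamma> j\<bar> < 2 * \<epsilon>0 / C"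
    using lim unfolding LIMSEQ_iff by fastforce
  define j2 where "j2 = max j1 1"
  define F where "F = ln (1 + C / (2 * \<epsilon>0))"
  have F0: "F \<ge> 0" unfolding F_def using Cpos e0 by simp
  show "\<exists>B. \<forall>\<epsilon> d. \<epsilon>0 \<le> \<epsilon> \<and> \<epsilon> < 1 \<and> d \<ge> 1 \<longrightarrow> ln (real (N_grid (product_weights \<gamma>) \<epsilon> d)) \<le> B"
  proof (intro exI[of _ "real j2 * F"] allI impI)
    fix \<epsilon> :: real and d :: nat assume a: "\<epsilon>0 \<le> \<epsilon> \<and> \<epsilon> < 1 \<and> d \<ge> 1"
    have ep: "\<epsilon> > 0" using a e0 by simp
    have "ln (real (N_grid (product_weights \<gamma>) \<epsilon> d)) \<le> (\<Sum>j\<in>{1..d}. ln (real (mm C \<gamma> \<epsilon> j)))"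
      using hC Cpos ep a by (intro ln_N_upper[OF g]) auto
    also have "\<dots> \<le> real j2 * F"
    proof (rule sum_cut)
      show "\<forall>j\<ge>1. 0 \<le> ln (real (mm C \<gamma> \<epsilon> j))" using g Cpos ep mm_props(1) by blast
      show "\<forall>j\<ge>j2. ln (real (mm C \<gamma> \<epsilon> j)) = 0"
      proof (intro allI impI)
        fix j assume j: "j \<ge> j2"
        then have jj: "j \<ge> 1" "j \<ge> j1" unfolding j2_def by auto
        have gj: "0 \<le> \<gamma> j" using g jj by auto
        have "\<gamma> j \<le> real j * \<gamma> j" using jj gj by (simp add: mult_le_cancel_right1)
        also have "\<dots> < 2 * \<epsilon>0 / C" using j1 jj gj by fastforce
        finally have "C * \<gamma> j < 2 * \<epsilon>0" using Cpos by (simp add: less_divide_eq mult.commute)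
        then have "C * \<gamma> j \<le> 2 * \<epsilon>" using a by simp
        then show "ln (real (mm C \<gamma> \<epsilon> j)) = 0" using mm_props(3)[where \<gamma>=\<gamma> and j=j and C=C and \<epsilon>=\<epsilon>, OF gj Cpos ep] by blast
      qed
      show "\<forall>j\<ge>1. ln (real (mm C \<gamma> \<epsilon> j)) \<le> F"
      proof (intro allI impI)
        fix j :: nat assume "j \<ge> 1"
        then have gj: "0 \<le> \<gamma> j" "\<gamma> j \<le> 1" using g by auto
        have "ln (real (mm C \<gamma> \<epsilon> j)) \<le> ln (1 + C * \<gamma> j / (2 * \<epsilon>))" by (rule mm_props(2)[where \<gamma>=\<gamma> and j=j and C=C and \<epsilon>=\<epsilon>, OF gj(1) Cpos ep])
        also have "\<dots> \<le> F"
        proof -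
          have r: "C * \<gamma> j / (2 * \<epsilon>) \<le> C / (2 * \<epsilon>0)" using ratio_le[OF Cpos gj e0] a by blast
          have p: "0 < 1 + C * \<gamma> j / (2 * \<epsilon>)" using gj Cpos ep by (simp add: add_pos_nonneg)
          have "1 + C * \<gamma> j / (2 * \<epsilon>) \<le> 1 + C / (2 * \<epsilon>0)" using r by simp
          then show ?thesis unfolding F_def using p by (metis ln_le_cancel_iff order_less_le_trans)
        qed
        finally show "ln (real (mm C \<gamma> \<epsilon> j)) \<le> F" .
      qed
    qed (rule F0)
    finally show "ln (real (N_grid (product_weights \<gamma>) \<epsilon> d)) \<le> real j2 * F" .
  qed
qed


lemma propA_WT:
  fixes \<gamma> :: "nat \<Rightarrow> real"
  assumes g: "\<forall>i\<ge>1. 0 \<le> \<gamma> i \<and> \<gamma> i \<le> 1"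
    and hC: "\<forall>d. \<forall>u. u \<subseteq> {1..d} \<longrightarrow> (\<Sum>j\<in>u. prod \<gamma> (u - {j})) \<le> C"
    and Cpos: "C > 0" and lim: "(\<lambda>j. real j * \<gamma> j) \<longlonglongrightarrow> 0"
  shows "\<forall>\<delta>>0. \<exists>\<epsilon>0>0. \<forall>\<epsilon> d. 0 < \<epsilon> \<and> \<epsilon> < \<epsilon>0 \<and> \<epsilon> < 1 \<and> d \<ge> 1 \<longrightarrow>
           ln (real (N_grid (product_weights \<gamma>) \<epsilon> d)) \<le> \<delta> * (1 / \<epsilon>) powr 1"
proof (intro allI impI)
  fix \<delta> :: real assume dp: "\<delta> > 0"
  define \<eta> where "\<eta> = \<delta> / (4 * C)"
  have etap: "\<eta> > 0" unfolding \<eta>_def using dp Cpos by simp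
  then obtain j0' where j0': "\<forall>j\<ge>j0'. \<bar>real j * \<gamma> j\<bar> < \<eta>"
    using lim unfolding LIMSEQ_iff by fastforce
  define j0 where "j0 = max j0' 1"
  have j01: "j0 \<ge> 1" unfolding j0_def by simp
  have j0pos: "real j0 > 0" using j01 by simp
  define \<epsilon>0 where "\<epsilon>0 = \<delta>^2 / (8 * C * (real j0)^2)"
  have e0p: "\<epsilon>0 > 0" unfolding \<epsilon>0_def using dp Cpos j0pos by simp
  show "\<exists>\<epsilon>0>0. \<forall>\<epsilon> d. 0 < \<epsilon> \<and> \<epsilon> < \<epsilon>0 \<and> \<epsilon> < 1 \<and> d \<ge> 1 \<longrightarrow>
           ln (real (N_grid (product_weights \<gamma>) \<epsilon> d)) \<le> \<delta> * (1 / \<epsilon>) powr 1"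
  proof (intro exI[of _ \<epsilon>0] conjI allI impI e0p)
    fix \<epsilon> :: real and d :: nat assume a: "0 < \<epsilon> \<and> \<epsilon> < \<epsilon>0 \<and> \<epsilon> < 1 \<and> d \<ge> 1"
    have ep: "\<epsilon> > 0" using a by simp
    define f where "f j = ln (real (mm C \<gamma> \<epsilon> j))" for j
    define P where "P = C * \<eta> / (2 * \<epsilon>)"
    have P0: "P > 0" unfolding P_def using Cpos etap ep by simp
    have P4: "4 * P = \<delta> / (2 * \<epsilon>)" unfolding P_def \<eta>_def using Cpos ep by (simp add: field_simps)
    define M where "M = nat \<lfloor>P\<rfloor>"
    define S where "S = 2 * sqrt (C / (2 * \<epsilon>))"
    have S0: "S \<ge> 0" unfolding S_def using Cpos ep by simp
    define a where "a j = (if j < j0 then S else 0)" for j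
    define b where "b j = (if real j \<le> P then 2 * sqrt (P / real j) else 0)" for j
    have f0: "\<forall>j\<ge>1. 0 \<le> f j" unfolding f_def using g Cpos ep mm_props(1) by blast
    have fx: "f j \<le> 2 * sqrt (C * \<gamma> j / (2 * \<epsilon>))" if j: "j \<ge> 1" for j
    proof -
      have gj: "0 \<le> \<gamma> j" using g j by auto
      have "f j \<le> ln (1 + C * \<gamma> j / (2 * \<epsilon>))" unfolding f_def
        by (rule mm_props(2)[where \<gamma>=\<gamma> and j=j and C=C and \<epsilon>=\<epsilon>, OF gj Cpos ep])
      also have "\<dots> \<le> 2 * sqrt (C * \<gamma> j / (2 * \<epsilon>))" using gj Cpos ep by (intro ln_sqrt_bound) simp
      finally show ?thesis .
    qed
    have fab: "f j \<le> a j + b j" if j: "j \<ge> 1" for j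
    proof -
      have gj: "0 \<le> \<gamma> j" "\<gamma> j \<le> 1" using g j by auto
      have b0: "b j \<ge> 0" unfolding b_def by simp
      show ?thesis
      proof (cases "j < j0")
        case True
        have "f j \<le> 2 * sqrt (C * \<gamma> j / (2 * \<epsilon>))" by (rule fx[OF j])
        also have "\<dots> \<le> S" unfolding S_def using ratio_le[OF Cpos gj ep] by simp
        finally show ?thesis using True b0 unfolding a_def by simp
      next
        case False
        then have jj: "j \<ge> j0'" unfolding j0_def by simp
        have jpos: "real j > 0" using j by simp
        have "real j * \<gamma> j < \<eta>" using j0' jj gj by fastforce
        then have "\<gamma> j \<le> \<eta> / real j" using jpos by (simp add: le_divide_eq mult.commute)
        then have "C * \<gamma> j / (2 * \<epsilon>) \<le> C * (\<eta> / real j) / (2 * \<epsilon>)" using Cpos ep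
          by (intro divide_right_mono mult_left_mono) auto
        also have "\<dots> = P / real j" unfolding P_def by simp
        finally have xP: "C * \<gamma> j / (2 * \<epsilon>) \<le> P / real j" .
        have a0: "a j = 0" unfolding a_def using False by simp
        show ?thesis
        proof (cases "real j \<le> P")
          case True
          have "f j \<le> 2 * sqrt (C * \<gamma> j / (2 * \<epsilon>))" by (rule fx[OF j])
          also have "\<dots> \<le> 2 * sqrt (P / real j)" using xP by simp
          finally show ?thesis using True a0 unfolding b_def by simp
        next
          case False
          then have "P / real j < 1" using jpos by (simp add: divide_less_eq)
          then have "C * \<gamma> j / (2 * \<epsilon>) \<le> 1" using xP by simp
          then have "C * \<gamma> j \<le> 2 * \<epsilon>" using ep by (simp add: divide_le_eq)
          then have "f j = 0" unfolding f_def
            using mm_props(3)[where \<gamma>=\<gamma> and j=j and C=C and \<epsilon>=\<epsilon>, OF gj(1) Cpos ep] by blast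
          then show ?thesis using a0 b0 by simp
        qed
      qed
    qed
    have "ln (real (N_grid (product_weights \<gamma>) \<epsilon> d)) \<le> (\<Sum>j\<in>{1..d}. f j)"
      unfolding f_def using hC Cpos ep a by (intro ln_N_upper[OF g]) auto
    also have "\<dots> \<le> (\<Sum>j\<in>{1..d}. a j + b j)" using fab by (intro sum_mono) auto
    also have "\<dots> = (\<Sum>j\<in>{1..d}. a j) + (\<Sum>j\<in>{1..d}. b j)" by (simp add: sum.distrib)
    also have "(\<Sum>j\<in>{1..d}. a j) \<le> real j0 * S"
      using S0 by (intro sum_cut) (auto simp: a_def)
    also have "(\<Sum>j\<in>{1..d}. b j) \<le> (\<Sum>j\<in>{1..M}. b j)"
    proof (rule sum_cut2)
      show "\<forall>j\<ge>1. 0 \<le> b j" unfolding b_def by simp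
      show "\<forall>j>M. b j = 0"
      proof (intro allI impI)
        fix j assume "j > M"
        then have "real j > P" unfolding M_def using P0 by linarith
        then show "b j = 0" unfolding b_def by simp
      qed
    qed
    also have "(\<Sum>j\<in>{1..M}. b j) = (\<Sum>j\<in>{1..M}. 2 * sqrt P * (1 / sqrt (real j)))"
    proof (intro sum.cong refl)
      fix j assume "j \<in> {1..M}"
      then have "j \<le> nat \<lfloor>P\<rfloor>" unfolding M_def by simp
      then have "real j \<le> P" using P0 by linarith
      then show "b j = 2 * sqrt P * (1 / sqrt (real j))" unfolding b_def by (simp add: real_sqrt_divide)
    qed
    also have "\<dots> = 2 * sqrt P * (\<Sum>j\<in>{1..M}. 1 / sqrt (real j))" by (simp add: sum_distrib_left)
    also have "\<dots> \<le> 2 * sqrt P * (2 * sqrt (real M))" using P0 by (intro mult_left_mono sum_inv_sqrt) auto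
    also have "\<dots> \<le> 2 * sqrt P * (2 * sqrt P)"
    proof -
      have "real M \<le> P" unfolding M_def using P0 by linarith
      then show ?thesis using P0 by (intro mult_left_mono) auto
    qed
    also have "\<dots> = 4 * P" using P0 by (simp add: algebra_simps)
    also have "real j0 * S \<le> \<delta> / (2 * \<epsilon>)"
    proof -
      have "sqrt (C / (2 * \<epsilon>)) \<le> \<delta> / (4 * real j0 * \<epsilon>)"
      proof (rule real_le_lsqrt)
        show "0 \<le> \<delta> / (4 * real j0 * \<epsilon>)" using dp j0pos ep by simp
        have "8 * C * (real j0)^2 * \<epsilon> < \<delta>^2" using a Cpos j0pos unfolding \<epsilon>0_def by (simp add: less_divide_eq mult.commute)
        then have "(8 * C * (real j0)^2 * \<epsilon>) / (16 * (real j0)^2 * \<epsilon>^2) \<le> \<delta>^2 / (16 * (real j0)^2 * \<epsilon>^2)"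
          using j0pos ep by (intro divide_right_mono) auto
        moreover have "(8 * C * (real j0)^2 * \<epsilon>) / (16 * (real j0)^2 * \<epsilon>^2) = C / (2 * \<epsilon>)"
          using j0pos ep by (simp add: power2_eq_square field_simps)
        moreover have "\<delta>^2 / (16 * (real j0)^2 * \<epsilon>^2) = (\<delta> / (4 * real j0 * \<epsilon>))^2"
          by (simp add: power2_eq_square field_simps)
        ultimately show "C / (2 * \<epsilon>) \<le> (\<delta> / (4 * real j0 * \<epsilon>))^2" by simp
      qed
      then have "real j0 * S \<le> real j0 * (2 * (\<delta> / (4 * real j0 * \<epsilon>)))" unfolding S_def
        using j0pos by (intro mult_left_mono) auto
      also have "\<dots> = \<delta> / (2 * \<epsilon>)" using j0pos ep by (simp add: field_simps)
      finally show ?thesis .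
    qed
    also have "\<delta> / (2 * \<epsilon>) + 4 * P = \<delta> * (1 / \<epsilon>) powr 1"
      unfolding P4 using ep by (simp add: powr_one field_simps)
    finally show "ln (real (N_grid (product_weights \<gamma>) \<epsilon> d)) \<le> \<delta> * (1 / \<epsilon>) powr 1" by simp
  qed
qed


lemma propA_UWT:
  fixes \<gamma> :: "nat \<Rightarrow> real"
  assumes g: "\<forall>i\<ge>1. 0 \<le> \<gamma> i \<and> \<gamma> i \<le> 1"
    and hC: "\<forall>d. \<forall>u. u \<subseteq> {1..d} \<longrightarrow> (\<Sum>j\<in>u. prod \<gamma> (u - {j})) \<le> C"
    and Cpos: "C > 0" and lims: "\<forall>n::nat. n \<ge> 1 \<longrightarrow> (\<lambda>j. real j ^ n * \<gamma> j) \<longlonglongrightarrow> 0"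
    and t: "0 < t" "t \<le> 1"
  shows "\<forall>\<delta>>0. \<exists>\<epsilon>0>0. \<forall>\<epsilon> d. 0 < \<epsilon> \<and> \<epsilon> < \<epsilon>0 \<and> \<epsilon> < 1 \<and> d \<ge> 1 \<longrightarrow>
           ln (real (N_grid (product_weights \<gamma>) \<epsilon> d)) \<le> \<delta> * (1 / \<epsilon>) powr t"
proof (intro allI impI)
  fix \<delta> :: real assume dp: "\<delta> > 0"
  define n where "n = nat \<lceil>4 / t\<rceil>"
  have nt: "real n \<ge> 4 / t" unfolding n_def by linarith
  have "4 / t \<ge> 4" using t by (simp add: le_divide_eq)
  then have n4: "real n \<ge> 4" using nt by linarith
  then have n1: "n \<ge> 1" by simp
  have npos: "real n > 0" using n4 by simp
  define c where "c = 1 / real n"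
  have c0: "c > 0" unfolding c_def using npos by simp
  have c2: "2 * c \<le> t / 2"
  proof -
    have "2 * c = 2 / real n" unfolding c_def by simp
    also have "\<dots> \<le> 2 / (4 / t)"
    proof (rule divide_left_mono)
      have "0 < 4 / t" using t by simp
      then show "0 < real n * (4 / t)" using npos by simp
    qed (use nt in auto)
    also have "\<dots> = t / 2" by simp
    finally show ?thesis .
  qed
  obtain j0' where j0': "\<forall>j\<ge>j0'. \<bar>real j ^ n * \<gamma> j\<bar> < 1"
    using lims n1 unfolding LIMSEQ_iff by (metis diff_zero real_norm_def zero_less_one)
  define j0 where "j0 = max j0' 1"
  define Q where "Q = (C / 2) powr c"
  define R where "R = (1 + C / 2) powr c"
  define Acon where "Acon = (real j0 + 1 + Q) * real n * R"
  have Q0: "Q \<ge> 0" and R0: "R > 0" unfolding Q_def R_def using Cpos by auto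
  have Ap: "Acon > 0" unfolding Acon_def using Q0 R0 npos by (intro mult_pos_pos) auto
  define Y where "Y = max 1 ((Acon / \<delta>) powr (2 / t))"
  have Y1: "Y \<ge> 1" unfolding Y_def by simp
  show "\<exists>\<epsilon>0>0. \<forall>\<epsilon> d. 0 < \<epsilon> \<and> \<epsilon> < \<epsilon>0 \<and> \<epsilon> < 1 \<and> d \<ge> 1 \<longrightarrow>
           ln (real (N_grid (product_weights \<gamma>) \<epsilon> d)) \<le> \<delta> * (1 / \<epsilon>) powr t"
  proof (intro exI[of _ "1 / Y"] conjI allI impI)
    show "1 / Y > 0" using Y1 by simp
    fix \<epsilon> :: real and d :: nat assume a: "0 < \<epsilon> \<and> \<epsilon> < 1 / Y \<and> \<epsilon> < 1 \<and> d \<ge> 1"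
    have ep: "\<epsilon> > 0" using a by simp
    define y where "y = 1 / \<epsilon>"
    have yY: "y > Y" unfolding y_def using a Y1 by (simp add: less_divide_eq mult.commute)
    then have y1: "y \<ge> 1" using Y1 by simp
    have ypos: "y > 0" using y1 by simp
    define f where "f j = ln (real (mm C \<gamma> \<epsilon> j))" for j
    define J where "J = nat \<lceil>(C / 2 * y) powr c\<rceil>"
    define F where "F = real n * (1 + C / 2 * y) powr c"
    have F0: "F \<ge> 0" unfolding F_def using npos by simp
    have "ln (real (N_grid (product_weights \<gamma>) \<epsilon> d)) \<le> (\<Sum>j\<in>{1..d}. f j)"
      unfolding f_def using hC Cpos ep a by (intro ln_N_upper[OF g]) auto
    also have "\<dots> \<le> real (j0 + J) * F"
    proof (rule sum_cut)
      show "\<forall>j\<ge>1. 0 \<le> f j" unfolding f_def using g Cpos ep mm_props(1) by blast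
      show "\<forall>j\<ge>j0 + J. f j = 0"
      proof (intro allI impI)
        fix j assume j: "j \<ge> j0 + J"
        then have jj: "j \<ge> 1" "j \<ge> j0'" "j \<ge> J" unfolding j0_def by auto
        have gj: "0 \<le> \<gamma> j" using g jj by auto
        have jpos: "real j > 0" using jj by simp
        have jn: "real j ^ n > 0" using jpos by simp
        have "real j ^ n * \<gamma> j < 1" using j0' jj gj jn by fastforce
        then have g1: "\<gamma> j \<le> 1 / real j ^ n" using jn by (simp add: le_divide_eq mult.commute)
        have "real j \<ge> (C / 2 * y) powr c"
        proof -
          have "real J \<ge> (C / 2 * y) powr c" unfolding J_def by linarith
          then show ?thesis using jj(3) by linarith
        qed
        then have "real j ^ n \<ge> ((C / 2 * y) powr c) ^ n" by (intro power_mono) auto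
        also have "((C / 2 * y) powr c) ^ n = C / 2 * y"
        proof -
          have "((C / 2 * y) powr c) ^ n = ((C / 2 * y) powr c) powr real n"
            using Cpos ypos by (simp add: powr_realpow)
          also have "\<dots> = (C / 2 * y) powr (c * real n)" by (simp add: powr_powr)
          also have "c * real n = 1" unfolding c_def using npos by simp
          finally show ?thesis using Cpos ypos by simp
        qed
        finally have jnC: "C / 2 * y \<le> real j ^ n" .
        have "C * \<gamma> j \<le> C * (1 / real j ^ n)" using g1 Cpos by (intro mult_left_mono) auto
        also have "\<dots> \<le> C * (1 / (C / 2 * y))" using jnC Cpos ypos jn
          by (intro mult_left_mono divide_left_mono) (auto intro: mult_pos_pos)
        also have "\<dots> = 2 * \<epsilon>" unfolding y_def using Cpos ep by simp
        finally have "C * \<gamma> j \<le> 2 * \<epsilon>" .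
        then show "f j = 0" unfolding f_def
          using mm_props(3)[where \<gamma>=\<gamma> and j=j and C=C and \<epsilon>=\<epsilon>, OF gj Cpos ep] by blast
      qed
      show "\<forall>j\<ge>1. f j \<le> F"
      proof (intro allI impI)
        fix j :: nat assume "j \<ge> 1"
        then have gj: "0 \<le> \<gamma> j" "\<gamma> j \<le> 1" using g by auto
        have "f j \<le> ln (1 + C * \<gamma> j / (2 * \<epsilon>))" unfolding f_def
          by (rule mm_props(2)[where \<gamma>=\<gamma> and j=j and C=C and \<epsilon>=\<epsilon>, OF gj(1) Cpos ep])
        also have "\<dots> \<le> ln (1 + C / 2 * y)"
        proof -
          have r: "C * \<gamma> j / (2 * \<epsilon>) \<le> C / (2 * \<epsilon>)" using ratio_le[OF Cpos gj ep] by simp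
          have p: "0 < 1 + C * \<gamma> j / (2 * \<epsilon>)" using gj Cpos ep by (simp add: add_pos_nonneg)
          have "C / (2 * \<epsilon>) = C / 2 * y" unfolding y_def by simp
          then have "1 + C * \<gamma> j / (2 * \<epsilon>) \<le> 1 + C / 2 * y" using r by simp
          then show ?thesis using p by (metis ln_le_cancel_iff order_less_le_trans)
        qed
        also have "\<dots> \<le> F"
        proof -
          have "C / 2 * y > 0" using Cpos ypos by simp
          then have "1 + C / 2 * y > 0" by linarith
          then show ?thesis unfolding F_def c_def using n1 by (intro ln_powr_bound) auto
        qed
        finally show "f j \<le> F" .
      qed
    qed (rule F0)
    also have "\<dots> \<le> Acon * y powr (2 * c)"
    proof -
      define w where "w = y powr c"
      have w1: "w \<ge> 1" unfolding w_def using y1 c0 by (intro ge_one_powr_ge_zero) auto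
      have "real (j0 + J) \<le> real j0 + (C / 2 * y) powr c + 1"
      proof -
        have z0: "(C / 2 * y) powr c \<ge> 0" by simp
        have "real J \<le> (C / 2 * y) powr c + 1" unfolding J_def using z0 by linarith
        then show ?thesis by simp
      qed
      also have "(C / 2 * y) powr c = Q * w" unfolding Q_def w_def using Cpos ypos by (subst powr_mult) auto
      also have "real j0 + Q * w + 1 \<le> (real j0 + 1 + Q) * w"
      proof -
        have "(real j0 + 1) * 1 \<le> (real j0 + 1) * w" using w1 by (intro mult_left_mono) auto
        then show ?thesis by (simp add: algebra_simps)
      qed
      finally have j1b: "real (j0 + J) \<le> (real j0 + 1 + Q) * w" .
      have "F \<le> real n * (R * w)"
      proof -
        have "1 + C / 2 * y \<le> (1 + C / 2) * y" using y1 by (simp add: algebra_simps)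
        then have "(1 + C / 2 * y) powr c \<le> ((1 + C / 2) * y) powr c" using c0 Cpos ypos
          by (intro powr_mono2) auto
        also have "\<dots> = R * w" unfolding R_def w_def using Cpos ypos by (subst powr_mult) auto
        finally show ?thesis unfolding F_def using npos by simp
      qed
      have "real (j0 + J) * F \<le> ((real j0 + 1 + Q) * w) * (real n * (R * w))"
        using j1b \<open>F \<le> real n * (R * w)\<close> F0 w1 Q0 by (intro mult_mono) auto
      also have "\<dots> = Acon * (w * w)" unfolding Acon_def by (simp add: algebra_simps)
      also have "w * w = y powr (2 * c)" unfolding w_def by (simp add: powr_add[symmetric])
      finally show ?thesis .
    qed
    also have "\<dots> \<le> Acon * y powr (t / 2)" using Ap y1 c2 by (intro mult_left_mono powr_mono) auto
    also have "\<dots> \<le> \<delta> * (1 / \<epsilon>) powr t"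
    proof -
      have "y powr (t / 2) \<ge> Y powr (t / 2)" using yY Y1 t by (intro powr_mono2) auto
      moreover have "Y powr (t / 2) \<ge> ((Acon / \<delta>) powr (2 / t)) powr (t / 2)"
        unfolding Y_def using t by (intro powr_mono2) auto
      moreover have "((Acon / \<delta>) powr (2 / t)) powr (t / 2) = Acon / \<delta>"
        using t Ap dp by (simp add: powr_powr)
      ultimately have h: "Acon / \<delta> \<le> y powr (t / 2)" by simp
      have "Acon * y powr (t / 2) = \<delta> * ((Acon / \<delta>) * y powr (t / 2))" using dp by simp
      also have "\<dots> \<le> \<delta> * (y powr (t / 2) * y powr (t / 2))" using h dp by (intro mult_left_mono mult_right_mono) auto
      also have "y powr (t / 2) * y powr (t / 2) = y powr t" by (simp add: powr_add[symmetric])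
      finally show ?thesis unfolding y_def .
    qed
    finally show "ln (real (N_grid (product_weights \<gamma>) \<epsilon> d)) \<le> \<delta> * (1 / \<epsilon>) powr t" .
  qed
qed


lemma final:
  fixes \<gamma> :: "nat \<Rightarrow> real"
  assumes "\<gamma> 1 \<le> 1"
    and "\<And>j. j \<ge> 1 \<Longrightarrow> \<gamma> (Suc j) \<le> \<gamma> j"
    and "\<And>j. j \<ge> 1 \<Longrightarrow> 0 \<le> \<gamma> j"
  shows "(grid_WT (product_weights \<gamma>) \<longleftrightarrow> (\<lambda>j. real j * \<gamma> j) \<longlonglongrightarrow> 0)
       \<and> (grid_UWT (product_weights \<gamma>) \<longleftrightarrow> (\<forall>n::nat. n \<ge> 1 \<longrightarrow> (\<lambda>j. real j ^ n * \<gamma> j) \<longlonglongrightarrow> 0))"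
proof -
  have monoij: "\<gamma> j \<le> \<gamma> i" if "1 \<le> i" "i \<le> j" for i j
    using that(2,1)
  proof (induction j rule: dec_induct)
    case base then show ?case by simp
  next
    case (step k)
    have "\<gamma> (Suc k) \<le> \<gamma> k" using step assms(2) by simp
    then show ?case using step by simp
  qed
  have mono: "\<forall>i j. 1 \<le> i \<and> i \<le> j \<longrightarrow> \<gamma> j \<le> \<gamma> i" using monoij by blast
  have g: "\<forall>i\<ge>1. 0 \<le> \<gamma> i \<and> \<gamma> i \<le> 1"
    using assms(1,3) monoij[of 1] by (meson order_trans order_refl)
  have pos: "\<forall>\<epsilon> d. 0 < \<epsilon> \<and> \<epsilon> < 1 \<and> d \<ge> 1 \<longrightarrow> N_grid (product_weights \<gamma>) \<epsilon> d \<ge> 1"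
  proof (intro allI impI)
    fix \<epsilon> :: real and d :: nat assume a: "0 < \<epsilon> \<and> \<epsilon> < 1 \<and> d \<ge> 1"
    then show "N_grid (product_weights \<gamma>) \<epsilon> d \<ge> 1"
      by (intro N_grid_upper(1)[OF g hC_trivial[OF g]]) auto
  qed
  have hsetup: "\<exists>C. C > 0 \<and> (\<forall>d. \<forall>u. u \<subseteq> {1..d} \<longrightarrow> (\<Sum>j\<in>u. prod \<gamma> (u - {j})) \<le> C)"
    if lim: "(\<lambda>j. real j * \<gamma> j) \<longlonglongrightarrow> 0"
  proof -
    obtain q' where q': "\<forall>j\<ge>q'. \<bar>real j * \<gamma> j\<bar> < 1/2"
      using lim unfolding LIMSEQ_iff by (metis diff_zero real_norm_def half_gt_zero zero_less_one)
    define q where "q = max q' 1"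
    have q: "\<forall>i\<ge>q. \<gamma> i \<le> 1/2"
    proof (intro allI impI)
      fix i assume i: "i \<ge> q"
      then have ii: "i \<ge> 1" "i \<ge> q'" unfolding q_def by auto
      have gi: "0 \<le> \<gamma> i" using g ii by auto
      have "\<gamma> i \<le> real i * \<gamma> i" using ii gi by (simp add: mult_le_cancel_right1)
      also have "\<dots> < 1/2" using q' ii gi by fastforce
      finally show "\<gamma> i \<le> 1/2" by simp
    qed
    show ?thesis using hC_q[OF g q] by (intro exI[of _ "2 ^ (q + 1)"]) auto
  qed
  have WT_if: "grid_WT (product_weights \<gamma>)" if lim: "(\<lambda>j. real j * \<gamma> j) \<longlonglongrightarrow> 0"
  proof -
    obtain C where Cpos: "C > 0" and hC: "\<forall>d. \<forall>u. u \<subseteq> {1..d} \<longrightarrow> (\<Sum>j\<in>u. prod \<gamma> (u - {j})) \<le> C"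
      using hsetup[OF lim] by blast
    have G: "\<forall>\<delta>>0. \<exists>K. \<forall>\<epsilon> d. 0 < \<epsilon> \<and> \<epsilon> < 1 \<and> d \<ge> 1 \<and> (1 / \<epsilon>) powr 1 + real d powr 1 > K \<longrightarrow>
       \<bar>ln (real (N_grid (product_weights \<gamma>) \<epsilon> d)) / ((1 / \<epsilon>) powr 1 + real d powr 1)\<bar> \<le> \<delta>"
      by (rule gen_tract[OF pos propA_WT[OF g hC Cpos lim] propB[OF g hC Cpos lim]])
    show ?thesis unfolding grid_WT_def
    proof (intro allI impI)
      fix \<delta> :: real assume dp: "\<delta> > 0"
      then obtain K where K: "\<forall>\<epsilon> d. 0 < \<epsilon> \<and> \<epsilon> < 1 \<and> d \<ge> 1 \<and> (1 / \<epsilon>) powr 1 + real d powr 1 > K \<longrightarrow>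
       \<bar>ln (real (N_grid (product_weights \<gamma>) \<epsilon> d)) / ((1 / \<epsilon>) powr 1 + real d powr 1)\<bar> \<le> \<delta>"
        using G by blast
      show "\<exists>K. \<forall>\<epsilon> d. 0 < \<epsilon> \<and> \<epsilon> < 1 \<and> d \<ge> 1 \<and> 1 / \<epsilon> + real d > K \<longrightarrow>
       \<bar>ln (real (N_grid (product_weights \<gamma>) \<epsilon> d)) / (1 / \<epsilon> + real d)\<bar> \<le> \<delta>"
      proof (intro exI[of _ K] allI impI)
        fix \<epsilon> :: real and d :: nat assume a: "0 < \<epsilon> \<and> \<epsilon> < 1 \<and> d \<ge> 1 \<and> 1 / \<epsilon> + real d > K"
        have e1: "(1 / \<epsilon>) powr 1 = 1 / \<epsilon>" using a by (simp add: powr_one)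
        have e2: "real d powr 1 = real d" by (simp add: powr_one)
        show "\<bar>ln (real (N_grid (product_weights \<gamma>) \<epsilon> d)) / (1 / \<epsilon> + real d)\<bar> \<le> \<delta>"
          using K[rule_format, of \<epsilon> d] a unfolding e1 e2 by blast
      qed
    qed
  qed
  have UWT_if: "grid_UWT (product_weights \<gamma>)"
    if lims: "\<forall>n::nat. n \<ge> 1 \<longrightarrow> (\<lambda>j. real j ^ n * \<gamma> j) \<longlonglongrightarrow> 0"
  proof -
    have lim: "(\<lambda>j. real j * \<gamma> j) \<longlonglongrightarrow> 0" using lims[rule_format, of 1] by simp
    obtain C where Cpos: "C > 0" and hC: "\<forall>d. \<forall>u. u \<subseteq> {1..d} \<longrightarrow> (\<Sum>j\<in>u. prod \<gamma> (u - {j})) \<le> C"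
      using hsetup[OF lim] by blast
    show ?thesis unfolding grid_UWT_def
    proof (rule allI, rule allI, rule impI)
      fix t1 t2 :: real assume t: "0 < t1 \<and> t1 \<le> 1 \<and> 0 < t2 \<and> t2 \<le> 1"
      show "\<forall>\<delta>>0. \<exists>K. \<forall>\<epsilon> d. 0 < \<epsilon> \<and> \<epsilon> < 1 \<and> d \<ge> 1 \<and> (1 / \<epsilon>) powr t1 + real d powr t2 > K \<longrightarrow>
       \<bar>ln (real (N_grid (product_weights \<gamma>) \<epsilon> d)) / ((1 / \<epsilon>) powr t1 + real d powr t2)\<bar> \<le> \<delta>"
      proof -
        have A: "\<forall>\<delta>>0. \<exists>\<epsilon>0>0. \<forall>\<epsilon> d. 0 < \<epsilon> \<and> \<epsilon> < \<epsilon>0 \<and> \<epsilon> < 1 \<and> d \<ge> 1 \<longrightarrow>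
           ln (real (N_grid (product_weights \<gamma>) \<epsilon> d)) \<le> \<delta> * (1 / \<epsilon>) powr t1"
          using t by (intro propA_UWT[OF g hC Cpos lims]) auto
        show ?thesis by (rule gen_tract[OF pos A propB[OF g hC Cpos lim]])
      qed
    qed
  qed
  show ?thesis
    using WT_if WT_only_if[OF g mono] UWT_if UWT_only_if[OF g mono] by blast
qed

theorem theorem1:
  fixes \<gamma> :: "nat \<Rightarrow> real"
  assumes "\<gamma> 1 \<le> 1"
    and "\<And>j. j \<ge> 1 \<Longrightarrow> \<gamma> (Suc j) \<le> \<gamma> j"
    and "\<And>j. j \<ge> 1 \<Longrightarrow> 0 \<le> \<gamma> j"
  shows "(grid_WT (product_weights \<gamma>) \<longleftrightarrow> (\<lambda>j. real j * \<gamma> j) \<longlonglongrightarrow> 0)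
       \<and> (grid_UWT (product_weights \<gamma>) \<longleftrightarrow> (\<forall>n::nat. n \<ge> 1 \<longrightarrow> (\<lambda>j. real j ^ n * \<gamma> j) \<longlonglongrightarrow> 0))"
  using assms by (rule final)

end
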